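(* Let $n\ge 1$, let $\lambda_0\in\mathbb{C}$, and let $\lambda_1^{\mathcal{C}},\dots,\lambda_n^{\mathcal{C}},\lambda_1^{\mathcal{B}},\dots,\lambda_n^{\mathcal{B}}\in\mathbb{C}$. Put $X=\{\lambda_1^{\mathcal{C}},\dots,\lambda_n^{\mathcal{C}}\}$, $Y=\{\lambda_1^{\mathcal{B}},\dots,\lambda_n^{\mathcal{B}}\}$, $X_\lambda=X\setminus\{\lambda\}$, $Y_\lambda=Y\setminus\{\lambda\}$. For $\lambda=\lambda_k^{\mathcal{C}}\in X$, let $\vec X^{0,n}_\lambda$ be the $n$-tuple obtained from $(\lambda_0,\lambda_1^{\mathcal{C}},\dots,\lambda_n^{\mathcal{C}})$ by deleting $\lambda_k^{\mathcal{C}}$; for $\lambda=\lambda_k^{\mathcal{B}}\in Y$, let $\vec Y^{0,n}_\lambda$ be obtained from $(\lambda_0,\lambda_1^{\mathcal{B}},\dots,\lambda_n^{\mathcal{B}})$ by deleting $\lambda_k^{\mathcal{B}}$. Define $$\widetilde M_0=\Lambda_{\tilde{\mathcal{D}}}(\lambda_0)\Big\{\prod_{\lambda\in Y}\frac{a(\lambda_0-\lambda)}{b(\lambda_0-\lambda)}\frac{a(\lambda_0+\lambda+\gamma)}{b(\lambda_0+\lambda+\gamma)}-\prod_{\lambda\in X}\frac{a(\lambda_0-\lambda)}{b(\lambda_0-\lambda)}\frac{a(\lambda_0+\lambda+\gamma)}{b(\lambda_0+\lambda+\gamma)}\Big\},$$ $$\widetilde N^{(\mathcal{C})}_\lambda=-\Lambda_{\mathcal{A}}(\lambda)\frac{c}{a(2\lambda_0)}\frac{b(2\lambda)}{a(2\lambda)}\frac{a(2\lambda_0+\gamma)}{a(\lambda_0+\lambda)}\prod_{\tilde\lambda\in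 X_\lambda}\frac{a(\tilde\lambda-\lambda)}{b(\tilde\lambda-\lambda)}\frac{b(\tilde\lambda+\lambda)}{a(\tilde\lambda+\lambda)}+\Lambda_{\tilde{\mathcal{D}}}(\lambda)\frac{a(2\lambda_0+\gamma)}{b(2\lambda_0+\gamma)}\frac{c}{b(\lambda_0-\lambda)}\prod_{\tilde\lambda\in X_\lambda}\frac{a(\lambda-\tilde\lambda)}{b(\lambda-\tilde\lambda)}\frac{a(\lambda+\tilde\lambda+\gamma)}{b(\lambda+\tilde\lambda+\gamma)}$$ for $\lambda\in X$, and $$\widetilde N^{(\mathcal{B})}_\lambda=\Lambda_{\mathcal{A}}(\lambda)\frac{c}{a(2\lambda_0)}\frac{b(2\lambda)}{a(2\lambda)}\frac{a(2\lambda_0+\gamma)}{a(\lambda_0+\lambda)}\prod_{\tilde\lambda\in Y_\lambda}\frac{a(\tilde\lambda-\lambda)}{b(\tilde\lambda-\lambda)}\frac{b(\tilde\lambda+\lambda)}{a(\tilde\lambda+\lambda)}-\Lambda_{\tilde{\mathcal{D}}}(\lambda)\frac{a(2\lambda_0+\gamma)}{b(2\lambda_0+\gamma)}\frac{c}{b(\lambda_0-\lambda)}\prod_{\tilde\lambda\in Y_\lambda}\frac{a(\lambda-\tilde\lambda)}{b(\lambda-\tilde\lambda)}\frac{a(\lambda+\tilde\lambda+\gamma)}{b(\lambda+\tilde\lambda+\gamma)}$$ for $\lambda\in Y$. Then $$\widetilde M_0\,\mathcal{S}_n(\lambda_1^{\mathcal{C}},\dots,\lambda_n^{\mathcal{C}}\,|\,\lambda_1^{\mathcal{B}},\dots,\lambda_n^{\mathcal{B}})+\sum_{\lambda\in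 X}\widetilde N^{(\mathcal{C})}_\lambda\,\mathcal{S}_n(\vec X^{0,n}_\lambda\,|\,\lambda_1^{\mathcal{B}},\dots,\lambda_n^{\mathcal{B}})+\sum_{\lambda\in Y}\widetilde N^{(\mathcal{B})}_\lambda\,\mathcal{S}_n(\lambda_1^{\mathcal{C}},\dots,\lambda_n^{\mathcal{C}}\,|\,\vec Y^{0,n}_\lambda)=0.$$
   Context: Fix generic $\gamma,h\in\mathbb{C}$, an integer $L\ge1$ and inhomogeneities $\mu_1,\dots,\mu_L\in\mathbb{C}$. Set $a(\lambda)=\sinh(\lambda+\gamma)$, $b(\lambda)=\sinh(\lambda)$, $c=\sinh(\gamma)$ (a constant). Let $\mathcal{R}(\lambda)\in\mathrm{End}(\mathbb{C}^2\otimes\mathbb{C}^2)$ be the six-vertex R-matrix, which in the basis $e_1\otimes e_1,e_1\otimes e_2,e_2\otimes e_1,e_2\otimes e_2$ is $\begin{pmatrix}a(\lambda)&0&0&0\\0&b(\lambda)&c&0\\0&c&b(\lambda)&0\\0&0&0&a(\lambda)\end{pmatrix}$, and let $\mathcal{K}(\lambda)=\mathrm{diag}(\sinh(h+\lambda),\sinh(h-\lambda))$. With auxiliary space $V_0\cong\mathbb{C}^2$ and quantum space $V_{\mathcal{Q}}=(\mathbb{C}^2)^{\otimes L}$, $\mathcal{R}_{0j}$ is $\mathcal{R}$ acting on $V_0\otimes V_j$ and $\mathcal{K}_0$ is $\mathcal{K}$ on $V_0$. Define $\mathcal{A},\mathcal{B},\mathcal{C},\mathcal{D}(\lambda)\in\mathrm{End}(V_{\mathcal{Q}})$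 by $\mathcal{R}_{0L}(\lambda-\mu_L)\cdots\mathcal{R}_{01}(\lambda-\mu_1)\mathcal{K}_0(\lambda)\mathcal{R}_{01}(\lambda+\mu_1)\cdots\mathcal{R}_{0L}(\lambda+\mu_L)=\begin{pmatrix}\mathcal{A}(\lambda)&\mathcal{B}(\lambda)\\\mathcal{C}(\lambda)&\mathcal{D}(\lambda)\end{pmatrix}$ on $V_0$. Let $|0\rangle=(1,0)^{T\otimes L}$, $\langle0|=(1,0)^{\otimes L}$. The scalar product is $\mathcal{S}_n(\lambda_1^{\mathcal{C}},\dots,\lambda_n^{\mathcal{C}}|\lambda_1^{\mathcal{B}},\dots,\lambda_n^{\mathcal{B}})=\langle0|\mathcal{C}(\lambda_n^{\mathcal{C}})\cdots\mathcal{C}(\lambda_1^{\mathcal{C}})\mathcal{B}(\lambda_1^{\mathcal{B}})\cdots\mathcal{B}(\lambda_n^{\mathcal{B}})|0\rangle$. Also $\Lambda_{\mathcal{A}}(\lambda)=b(h+\lambda)\prod_{j=1}^L a(\lambda-\mu_j)a(\lambda+\mu_j)$ and $\Lambda_{\tilde{\mathcal{D}}}(\lambda)=-\frac{b(2\lambda)}{a(2\lambda)}a(\lambda-h)\prod_{j=1}^L b(\lambda-\mu_j)b(\lambda+\mu_j)$. The identity is understood as an identity of meromorphic functions of all variables. *)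

theory Defs
  imports Complex_Main
begin

(* Weights of the trigonometric six-vertex model *)
definition fa :: "complex \<Rightarrow> complex \<Rightarrow> complex" where
  "fa \<gamma> x = sinh (x + \<gamma>)"
definition fb :: "complex \<Rightarrow> complex" where
  "fb x = sinh x"

(* Basis of C^2: index 0 = e_1, index 1 = e_2.
   Rmat g x i j k l = entry of R(x) in row e_i (x) e_j, column e_k (x) e_l. *)
definition Rmat :: "complex \<Rightarrow> complex \<Rightarrow> nat \<Rightarrow> nat \<Rightarrow> nat \<Rightarrow> nat \<Rightarrow> complex" where
  "Rmat \<gamma> x i j k l =
     (if i = j \<and> k = l \<and> i = k then fa \<gamma> x
      else if i \<noteq> j \<and> k = i \<and> l = j then fb x
      else if i \<noteq> j \<and> k = j \<and> l = i then sinh \<gamma>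
      else 0)"

(* Vectors of V_Q = (C^2)^{(x)L}: functions on basis states (lists over {0,1} of length L).
   Vectors of V_0 (x) V_Q: functions of the auxiliary index and the quantum state. *)
type_synonym qvec = "nat list \<Rightarrow> complex"
type_synonym avec = "nat \<Rightarrow> nat list \<Rightarrow> complex"

(* R_{0,p+1}(x) acting on V_0 (x) V_Q; the quantum site p+1 is list position p *)
definition Rop :: "complex \<Rightarrow> complex \<Rightarrow> nat \<Rightarrow> avec \<Rightarrow> avec" where
  "Rop \<gamma> x p v = (\<lambda>s0 s. \<Sum>t0\<in>{0,1::nat}. \<Sum>t\<in>{0,1::nat}.
       Rmat \<gamma> x s0 (s ! p) t0 t * v t0 (s[p := t]))"

definition Kop :: "complex \<Rightarrow> complex \<Rightarrow> avec \<Rightarrow> avec" where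
  "Kop h x v = (\<lambda>s0 s. (if s0 = 0 then sinh (h + x) else sinh (h - x)) * v s0 s)"

(* R_{0L}(x-mu_L) ... R_{01}(x-mu_1) K_0(x) R_{01}(x+mu_1) ... R_{0L}(x+mu_L),
   with mu = [mu_1, ..., mu_L] *)
definition DRop :: "complex \<Rightarrow> complex \<Rightarrow> complex list \<Rightarrow> complex \<Rightarrow> avec \<Rightarrow> avec" where
  "DRop \<gamma> h mu x v =
     fold (\<lambda>p w. Rop \<gamma> (x - mu ! p) p w) [0..<length mu]
       (Kop h x (fold (\<lambda>p w. Rop \<gamma> (x + mu ! p) p w) (rev [0..<length mu]) v))"

(* entry (i,j) of the double-row monodromy matrix, as an operator on V_Q *)
definition Top :: "complex \<Rightarrow> complex \<Rightarrow> complex list \<Rightarrow> nat \<Rightarrow> nat \<Rightarrow> complex \<Rightarrow> qvec \<Rightarrow> qvec" where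
  "Top \<gamma> h mu i j x w = (\<lambda>s. DRop \<gamma> h mu x (\<lambda>t0 t. if t0 = j then w t else 0) i s)"

definition Aop where "Aop \<gamma> h mu = Top \<gamma> h mu 0 0"
definition Bop where "Bop \<gamma> h mu = Top \<gamma> h mu 0 1"
definition Cop where "Cop \<gamma> h mu = Top \<gamma> h mu 1 0"
definition Dop where "Dop \<gamma> h mu = Top \<gamma> h mu 1 1"

definition vac :: "nat \<Rightarrow> qvec" where
  "vac L = (\<lambda>s. if s = replicate L 0 then 1 else 0)"

(* S_n(xs | ys) = <0| C(x_n) ... C(x_1) B(y_1) ... B(y_n) |0> *)
definition Sn :: "complex \<Rightarrow> complex \<Rightarrow> complex list \<Rightarrow> complex list \<Rightarrow> complex list \<Rightarrow> complex" where
  "Sn \<gamma> h mu xs ys =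
     fold (\<lambda>x w. Cop \<gamma> h mu x w) xs
       (foldr (\<lambda>y w. Bop \<gamma> h mu y w) ys (vac (length mu))) (replicate (length mu) 0)"

definition LambdaA :: "complex \<Rightarrow> complex \<Rightarrow> complex list \<Rightarrow> complex \<Rightarrow> complex" where
  "LambdaA \<gamma> h mu x = fb (h + x) * (\<Prod>j<length mu. fa \<gamma> (x - mu ! j) * fa \<gamma> (x + mu ! j))"

definition LambdaDt :: "complex \<Rightarrow> complex \<Rightarrow> complex list \<Rightarrow> complex \<Rightarrow> complex" where
  "LambdaDt \<gamma> h mu x = - (fb (2 * x) / fa \<gamma> (2 * x)) * fa \<gamma> (x - h) *
      (\<Prod>j<length mu. fb (x - mu ! j) * fb (x + mu ! j))"

(* delete the k-th entry (0-based) *)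
definition del_at :: "nat \<Rightarrow> 'a list \<Rightarrow> 'a list" where
  "del_at k xs = take k xs @ drop (Suc k) xs"

definition M0 :: "complex \<Rightarrow> complex \<Rightarrow> complex list \<Rightarrow> complex \<Rightarrow> complex list \<Rightarrow> complex list \<Rightarrow> complex" where
  "M0 \<gamma> h mu l0 xs ys = LambdaDt \<gamma> h mu l0 *
     ((\<Prod>k<length ys. fa \<gamma> (l0 - ys ! k) / fb (l0 - ys ! k) *
                       (fa \<gamma> (l0 + ys ! k + \<gamma>) / fb (l0 + ys ! k + \<gamma>)))
    - (\<Prod>k<length xs. fa \<gamma> (l0 - xs ! k) / fb (l0 - xs ! k) *
                       (fa \<gamma> (l0 + xs ! k + \<gamma>) / fb (l0 + xs ! k + \<gamma>))))"

definition NC :: "complex \<Rightarrow> complex \<Rightarrow> complex list \<Rightarrow> complex \<Rightarrow> complex list \<Rightarrow> nat \<Rightarrow> complex" where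
  "NC \<gamma> h mu l0 xs k = (let x = xs ! k in
     - LambdaA \<gamma> h mu x * (sinh \<gamma> / fa \<gamma> (2 * l0)) * (fb (2 * x) / fa \<gamma> (2 * x)) *
       (fa \<gamma> (2 * l0 + \<gamma>) / fa \<gamma> (l0 + x)) *
       (\<Prod>j\<in>{..<length xs} - {k}. fa \<gamma> (xs ! j - x) / fb (xs ! j - x) *
                                    (fb (xs ! j + x) / fa \<gamma> (xs ! j + x)))
     + LambdaDt \<gamma> h mu x * (fa \<gamma> (2 * l0 + \<gamma>) / fb (2 * l0 + \<gamma>)) * (sinh \<gamma> / fb (l0 - x)) *
       (\<Prod>j\<in>{..<length xs} - {k}. fa \<gamma> (x - xs ! j) / fb (x - xs ! j) *
                                    (fa \<gamma> (x + xs ! j + \<gamma>) / fb (x + xs ! j + \<gamma>))))"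

definition NB :: "complex \<Rightarrow> complex \<Rightarrow> complex list \<Rightarrow> complex \<Rightarrow> complex list \<Rightarrow> nat \<Rightarrow> complex" where
  "NB \<gamma> h mu l0 ys k = (let y = ys ! k in
     LambdaA \<gamma> h mu y * (sinh \<gamma> / fa \<gamma> (2 * l0)) * (fb (2 * y) / fa \<gamma> (2 * y)) *
       (fa \<gamma> (2 * l0 + \<gamma>) / fa \<gamma> (l0 + y)) *
       (\<Prod>j\<in>{..<length ys} - {k}. fa \<gamma> (ys ! j - y) / fb (ys ! j - y) *
                                    (fb (ys ! j + y) / fa \<gamma> (ys ! j + y)))
     - LambdaDt \<gamma> h mu y * (fa \<gamma> (2 * l0 + \<gamma>) / fb (2 * l0 + \<gamma>)) * (sinh \<gamma> / fb (l0 - y)) *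
       (\<Prod>j\<in>{..<length ys} - {k}. fa \<gamma> (y - ys ! j) / fb (y - ys ! j) *
                                    (fa \<gamma> (y + ys ! j + \<gamma>) / fb (y + ys ! j + \<gamma>))))"

end

theory Submission
  imports Defs
begin

lemma sinh_exp: "sinh (z::complex) = (exp z - inverse (exp z)) / 2"
  by (simp add: sinh_def exp_minus scaleR_conv_of_real)

lemma exp2c: "exp (2 * (z::complex)) = exp z * exp z"
  by (metis exp_add mult_2)

lemmas trig_simps = sinh_exp exp_add exp_diff exp_minus exp2c

lemma t1: fixes l m g :: complex
  shows "sinh (l+m) * sinh (2*m+g) - sinh g * sinh (l - m) = sinh (l+m+g) * sinh (2*m)"
  apply (simp only: trig_simps)
  by (simp add: field_simps)

type_synonym bvec = "nat \<Rightarrow> nat \<Rightarrow> nat list \<Rightarrow> complex"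

definition liftA :: "(avec \<Rightarrow> avec) \<Rightarrow> bvec \<Rightarrow> bvec" where
  "liftA F v = (\<lambda>a b s. F (\<lambda>c s'. v c b s') a s)"
definition liftB :: "(avec \<Rightarrow> avec) \<Rightarrow> bvec \<Rightarrow> bvec" where
  "liftB F v = (\<lambda>a b s. F (\<lambda>c s'. v a c s') b s)"
definition Rab :: "complex \<Rightarrow> complex \<Rightarrow> bvec \<Rightarrow> bvec" where
  "Rab g x v = (\<lambda>a b s. \<Sum>c\<in>{0,1::nat}. \<Sum>d\<in>{0,1::nat}. Rmat g x a b c d * v c d s)"

lemma Rmat_zero1: "j \<ge> 2 \<Longrightarrow> k \<le> 1 \<Longrightarrow> l \<le> 1 \<Longrightarrow> Rmat g x i j k l = 0"
  by (auto simp: Rmat_def)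
lemma Rmat_zero0: "i \<ge> 2 \<Longrightarrow> k \<le> 1 \<Longrightarrow> l \<le> 1 \<Longrightarrow> Rmat g x i j k l = 0"
  by (auto simp: Rmat_def)

lemma YB_A:
  assumes "L < length s"
  shows "liftA (Rop g p L) (Rab g (p+q) (liftB (Rop g q L) w)) a b s
       = liftB (Rop g q L) (Rab g (p+q) (liftA (Rop g p L) w)) a b s"
proof -
  consider "a \<ge> 2" | "b \<ge> 2" | "s!L \<ge> 2" | "a \<le> 1 \<and> b \<le> 1 \<and> s!L \<le> 1" by linarith
  then show ?thesis
  proof cases
    case 1 then show ?thesis
      by (simp add: liftA_def liftB_def Rab_def Rop_def Rmat_zero0)
  next
    case 2 then show ?thesis
      by (simp add: liftA_def liftB_def Rab_def Rop_def Rmat_zero0 Rmat_zero1)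
  next
    case 3 then show ?thesis
      by (simp add: liftA_def liftB_def Rab_def Rop_def Rmat_zero1)
  next
    case 4
    then have "a \<in> {0,1}" "b \<in> {0,1}" "s!L \<in> {0,1}" by auto
    then show ?thesis using assms
      apply (simp add: liftA_def liftB_def Rab_def Rop_def)
      apply (elim disjE)
      apply (simp_all add: Rmat_def fa_def fb_def)
      apply (simp_all only: trig_simps)
      apply (simp_all add: field_simps)
      done
  qed
qed

lemma YB_B:
  assumes "L < length s"
  shows "Rab g p (liftA (Rop g (p+q) L) (liftB (Rop g q L) w)) a b s
       = liftB (Rop g q L) (liftA (Rop g (p+q) L) (Rab g p w)) a b s"
proof -
  consider "a \<ge> 2" | "b \<ge> 2" | "s!L \<ge> 2" | "a \<le> 1 \<and> b \<le> 1 \<and> s!L \<le> 1" by linarith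
  then show ?thesis
  proof cases
    case 1 then show ?thesis
      by (simp add: liftA_def liftB_def Rab_def Rop_def Rmat_zero0)
  next
    case 2 then show ?thesis
      by (simp add: liftA_def liftB_def Rab_def Rop_def Rmat_zero0 Rmat_zero1)
  next
    case 3 then show ?thesis
      by (simp add: liftA_def liftB_def Rab_def Rop_def Rmat_zero1)
  next
    case 4
    then have "a \<in> {0,1}" "b \<in> {0,1}" "s!L \<in> {0,1}" by auto
    then show ?thesis using assms
      apply (simp add: liftA_def liftB_def Rab_def Rop_def)
      apply (elim disjE)
      apply (simp_all add: Rmat_def fa_def fb_def)
      apply (simp_all only: trig_simps)
      apply (simp_all add: field_simps)
      done
  qed
qed

lemma comm_Rop:
  assumes "p \<noteq> q"
  shows "liftA (Rop g x p) (liftB (Rop g y q) v) = liftB (Rop g y q) (liftA (Rop g x p) v)"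
  using assms
  by (auto simp: fun_eq_iff liftA_def liftB_def Rop_def list_update_swap sum_distrib_left
      algebra_simps intro: sum.swap)

lemma comm_KopA:
  "liftA (Kop h x) (liftB (Rop g y q) v) = liftB (Rop g y q) (liftA (Kop h x) v)"
  by (auto simp: fun_eq_iff liftA_def liftB_def Rop_def Kop_def sum_distrib_left algebra_simps)

lemma comm_KopB:
  "liftB (Kop h x) (liftA (Rop g y q) v) = liftA (Rop g y q) (liftB (Kop h x) v)"
  by (auto simp: fun_eq_iff liftA_def liftB_def Rop_def Kop_def sum_distrib_left algebra_simps)

lemma liftA_comp: "liftA (\<lambda>v. F (G v)) w = liftA F (liftA G w)"
  by (simp add: liftA_def)
lemma liftB_comp: "liftB (\<lambda>v. F (G v)) w = liftB F (liftB G w)"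
  by (simp add: liftB_def)

lemma DRop_Nil: "DRop g h [] x v = Kop h x v"
  by (simp add: DRop_def)

lemma DRop_snoc: "DRop g h (mu @ [m]) x v =
   Rop g (x - m) (length mu) (DRop g h mu x (Rop g (x + m) (length mu) v))"
proof -
  have f1: "fold (\<lambda>p w. Rop g (x - (mu @ [m]) ! p) p w) [0..<length mu] u
          = fold (\<lambda>p w. Rop g (x - mu ! p) p w) [0..<length mu] u" for u
    by (rule fold_cong) (auto simp: nth_append)
  have f2: "fold (\<lambda>p w. Rop g (x + (mu @ [m]) ! p) p w) (rev [0..<length mu]) u
          = fold (\<lambda>p w. Rop g (x + mu ! p) p w) (rev [0..<length mu]) u" for u
    by (rule fold_cong) (auto simp: nth_append)
  show ?thesis
    by (simp add: DRop_def f1 f2)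
qed

lemma liftA_fold_comm:
  assumes "\<And>p v. p \<in> set ps \<Longrightarrow> liftA (f p) (G v) = G (liftA (f p) v)"
  shows "liftA (fold f ps) (G v) = G (liftA (fold f ps) v)"
  using assms
proof (induction ps arbitrary: v)
  case Nil then show ?case by (simp add: liftA_def)
next
  case (Cons p ps)
  have "liftA (fold f (p # ps)) (G v) = liftA (fold f ps) (liftA (f p) (G v))"
    by (simp add: liftA_def)
  also have "\<dots> = liftA (fold f ps) (G (liftA (f p) v))" using Cons.prems by simp
  also have "\<dots> = G (liftA (fold f ps) (liftA (f p) v))" using Cons by simp
  also have "\<dots> = G (liftA (fold f (p # ps)) v)"
    by (simp add: liftA_def)
  finally show ?case .
qed

lemma liftB_fold_comm:
  assumes "\<And>p v. p \<in> set ps \<Longrightarrow> liftB (f p) (G v) = G (liftB (f p) v)"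
  shows "liftB (fold f ps) (G v) = G (liftB (fold f ps) v)"
  using assms
proof (induction ps arbitrary: v)
  case Nil then show ?case by (simp add: liftB_def)
next
  case (Cons p ps)
  have "liftB (fold f (p # ps)) (G v) = liftB (fold f ps) (liftB (f p) (G v))"
    by (simp add: liftB_def)
  also have "\<dots> = liftB (fold f ps) (G (liftB (f p) v))" using Cons.prems by simp
  also have "\<dots> = G (liftB (fold f ps) (liftB (f p) v))" using Cons by simp
  also have "\<dots> = G (liftB (fold f (p # ps)) v)"
    by (simp add: liftB_def)
  finally show ?case .
qed

lemma comm_DRopA:
  assumes "length mu \<le> L"
  shows "liftA (DRop g h mu x) (liftB (Rop g y L) v) = liftB (Rop g y L) (liftA (DRop g h mu x) v)"
proof -
  let ?F1 = "fold (\<lambda>p w. Rop g (x - mu ! p) p w) [0..<length mu]"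
  let ?F2 = "fold (\<lambda>p w. Rop g (x + mu ! p) p w) (rev [0..<length mu])"
  have e: "DRop g h mu x = (\<lambda>v. ?F1 (Kop h x (?F2 v)))"
    by (simp add: fun_eq_iff DRop_def)
  have c1: "liftA ?F1 (liftB (Rop g y L) v) = liftB (Rop g y L) (liftA ?F1 v)" for v
    by (rule liftA_fold_comm, rule comm_Rop) (use assms in auto)
  have c2: "liftA ?F2 (liftB (Rop g y L) v) = liftB (Rop g y L) (liftA ?F2 v)" for v
    by (rule liftA_fold_comm, rule comm_Rop) (use assms in auto)
  have d: "liftA (\<lambda>v. ?F1 (Kop h x (?F2 v))) w = liftA ?F1 (liftA (Kop h x) (liftA ?F2 w))" for w
    by (simp add: liftA_def)
  show ?thesis
    unfolding e d by (simp add: c1 c2 comm_KopA)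
qed

lemma comm_DRopB:
  assumes "length mu \<le> L"
  shows "liftB (DRop g h mu x) (liftA (Rop g y L) v) = liftA (Rop g y L) (liftB (DRop g h mu x) v)"
proof -
  let ?F1 = "fold (\<lambda>p w. Rop g (x - mu ! p) p w) [0..<length mu]"
  let ?F2 = "fold (\<lambda>p w. Rop g (x + mu ! p) p w) (rev [0..<length mu])"
  have e: "DRop g h mu x = (\<lambda>v. ?F1 (Kop h x (?F2 v)))"
    by (simp add: fun_eq_iff DRop_def)
  have cr: "liftB (Rop g x' p) (liftA (Rop g y L) v) = liftA (Rop g y L) (liftB (Rop g x' p) v)"
    if "p \<noteq> L" for p x' v using comm_Rop[of L p g y x' v] that by simp
  have c1: "liftB ?F1 (liftA (Rop g y L) v) = liftA (Rop g y L) (liftB ?F1 v)" for v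
    by (rule liftB_fold_comm, rule cr) (use assms in auto)
  have c2: "liftB ?F2 (liftA (Rop g y L) v) = liftA (Rop g y L) (liftB ?F2 v)" for v
    by (rule liftB_fold_comm, rule cr) (use assms in auto)
  have d: "liftB (\<lambda>v. ?F1 (Kop h x (?F2 v))) w = liftB ?F1 (liftB (Kop h x) (liftB ?F2 w))" for w
    by (simp add: liftB_def)
  show ?thesis
    unfolding e d by (simp add: c1 c2 comm_KopB)
qed

definition aloc :: "(avec \<Rightarrow> avec) \<Rightarrow> bool" where
  "aloc F \<longleftrightarrow> (\<forall>n v w. (\<forall>a s. length s = n \<longrightarrow> v a s = w a s) \<longrightarrow>
                        (\<forall>a s. length s = n \<longrightarrow> F v a s = F w a s))"

lemma alocD:
  assumes "aloc F" "\<And>a s. length s = n \<Longrightarrow> v a s = w a s" "length s = n"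
  shows "F v a s = F w a s"
  using assms unfolding aloc_def
  apply (drule_tac x=n in spec, drule_tac x=v in spec, drule_tac x=w in spec)
  by auto

lemma aloc_Rop: "aloc (Rop g x p)"
  unfolding aloc_def
proof (intro allI impI)
  fix n :: nat and v w :: avec and a :: nat and s :: "nat list"
  assume H: "\<forall>a s. length s = n \<longrightarrow> v a s = w a s" and l: "length s = n"
  show "Rop g x p v a s = Rop g x p w a s"
    unfolding Rop_def using H l by simp
qed

lemma aloc_Kop: "aloc (Kop h x)"
  unfolding aloc_def Kop_def by simp

lemma aloc_comp: assumes F: "aloc F" and G: "aloc G" shows "aloc (\<lambda>v. F (G v))"
  unfolding aloc_def
proof (intro allI impI)
  fix n :: nat and v w :: avec and a :: nat and s :: "nat list"
  assume H: "\<forall>a s. length s = n \<longrightarrow> v a s = w a s" and l: "length s = n"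
  have "G v a' s' = G w a' s'" if "length s' = n" for a' s'
    using alocD[OF G _ that] H by blast
  then show "F (G v) a s = F (G w) a s"
    using alocD[OF F _ l] by blast
qed

lemma aloc_fold: "(\<And>p. p \<in> set ps \<Longrightarrow> aloc (f p)) \<Longrightarrow> aloc (fold f ps)"
proof (induction ps)
  case Nil then show ?case by (simp add: aloc_def)
next
  case (Cons p ps)
  then have "aloc (\<lambda>v. fold f ps (f p v))"
    by (intro aloc_comp[of "fold f ps" "f p"]) auto
  then show ?case by (simp add: comp_def)
qed

lemma aloc_DRop: "aloc (DRop g h mu x)"
proof -
  let ?F1 = "fold (\<lambda>p w. Rop g (x - mu ! p) p w) [0..<length mu]"
  let ?F2 = "fold (\<lambda>p w. Rop g (x + mu ! p) p w) (rev [0..<length mu])"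
  have e: "DRop g h mu x = (\<lambda>v. ?F1 (Kop h x (?F2 v)))"
    by (simp add: fun_eq_iff DRop_def)
  have "aloc ?F1" by (rule aloc_fold) (rule aloc_Rop)
  moreover have "aloc ?F2" by (rule aloc_fold) (rule aloc_Rop)
  ultimately show ?thesis unfolding e
    by (intro aloc_comp[of ?F1 "\<lambda>v. Kop h x (?F2 v)"] aloc_comp[of "Kop h x" ?F2] aloc_Kop)
qed

definition eqn :: "nat \<Rightarrow> bvec \<Rightarrow> bvec \<Rightarrow> bool" where
  "eqn n v w \<longleftrightarrow> (\<forall>a b s. length s = n \<longrightarrow> v a b s = w a b s)"

lemma eqn_refl[simp]: "eqn n v v" by (simp add: eqn_def)
lemma eqn_trans: "eqn n u v \<Longrightarrow> eqn n v w \<Longrightarrow> eqn n u w" by (simp add: eqn_def)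
lemma eqn_sym: "eqn n u v \<Longrightarrow> eqn n v u" by (simp add: eqn_def)
lemma eqn_eq: "u = v \<Longrightarrow> eqn n u v" by simp

lemma eqn_liftA: assumes F: "aloc F" and e: "eqn n v w" shows "eqn n (liftA F v) (liftA F w)"
  unfolding eqn_def liftA_def
proof (intro allI impI)
  fix a b :: nat and s :: "nat list" assume l: "length s = n"
  show "F (\<lambda>c s'. v c b s') a s = F (\<lambda>c s'. w c b s') a s"
    by (rule alocD[OF F _ l]) (use e in \<open>simp add: eqn_def\<close>)
qed
lemma eqn_liftB: assumes F: "aloc F" and e: "eqn n v w" shows "eqn n (liftB F v) (liftB F w)"
  unfolding eqn_def liftB_def
proof (intro allI impI)
  fix a b :: nat and s :: "nat list" assume l: "length s = n"
  show "F (\<lambda>c s'. v a c s') b s = F (\<lambda>c s'. w a c s') b s"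
    by (rule alocD[OF F _ l]) (use e in \<open>simp add: eqn_def\<close>)
qed
lemma eqn_Rab: "eqn n v w \<Longrightarrow> eqn n (Rab g x v) (Rab g x w)"
  unfolding eqn_def Rab_def by simp

abbreviation "RaL g x L \<equiv> liftA (Rop g x L)"
abbreviation "RbL g x L \<equiv> liftB (Rop g x L)"
abbreviation "Ua g h mu x \<equiv> liftA (DRop g h mu x)"
abbreviation "Ub g h mu x \<equiv> liftB (DRop g h mu x)"

lemma YA_eqn: "L < n \<Longrightarrow> p + q = r \<Longrightarrow>
  eqn n (RaL g p L (Rab g r (RbL g q L w))) (RbL g q L (Rab g r (RaL g p L w)))"
  unfolding eqn_def using YB_A by blast
lemma YB_eqn: "L < n \<Longrightarrow> p + q = r \<Longrightarrow>
  eqn n (Rab g p (RaL g r L (RbL g q L w))) (RbL g q L (RaL g r L (Rab g p w)))"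
  unfolding eqn_def using YB_B by blast

lemma RE_base:
  "Rab g (l-u) (liftA (Kop h l) (Rab g (l+u) (liftB (Kop h u) v))) a b s =
   liftB (Kop h u) (Rab g (l+u) (liftA (Kop h l) (Rab g (l-u) v))) a b s"
proof -
  consider "a \<ge> 2" | "b \<ge> 2" | "a \<le> 1 \<and> b \<le> 1" by linarith
  then show ?thesis
  proof cases
    case 1 then show ?thesis
      by (simp add: liftA_def liftB_def Rab_def Kop_def Rmat_zero0)
  next
    case 2 then show ?thesis
      by (simp add: liftA_def liftB_def Rab_def Kop_def Rmat_zero1)
  next
    case 3
    then have "a \<in> {0,1}" "b \<in> {0,1}" by auto
    then show ?thesis
      apply (simp add: liftA_def liftB_def Rab_def Kop_def)
      apply (elim disjE)
      apply (simp_all add: Rmat_def fa_def fb_def)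
      apply (simp_all only: trig_simps)
      apply (simp_all add: field_simps)
      done
  qed
qed

lemma Ua_snoc: "liftA (DRop g h (mu @ [m]) x) v
   = liftA (Rop g (x - m) (length mu)) (liftA (DRop g h mu x) (liftA (Rop g (x + m) (length mu)) v))"
  by (simp add: liftA_def DRop_snoc)
lemma Ub_snoc: "liftB (DRop g h (mu @ [m]) x) v
   = liftB (Rop g (x - m) (length mu)) (liftB (DRop g h mu x) (liftB (Rop g (x + m) (length mu)) v))"
  by (simp add: liftB_def DRop_snoc)

lemma eqn_trans'[trans]: "eqn n a b \<Longrightarrow> eqn n b c \<Longrightarrow> eqn n a c" by (rule eqn_trans)
lemma eqn_eq_trans[trans]: "eqn n a b \<Longrightarrow> b = c \<Longrightarrow> eqn n a c" by simp
lemma eq_eqn_trans[trans]: "a = b \<Longrightarrow> eqn n b c \<Longrightarrow> eqn n a c" by simp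

lemmas eqn_intros = eqn_liftA eqn_liftB eqn_Rab aloc_Rop aloc_DRop

theorem RE:
  "length mu \<le> n \<Longrightarrow>
   eqn n (Rab g (l-u) (Ua g h mu l (Rab g (l+u) (Ub g h mu u v))))
         (Ub g h mu u (Rab g (l+u) (Ua g h mu l (Rab g (l-u) v))))"
proof (induction mu arbitrary: v rule: rev_induct)
  case Nil
  have e: "DRop g h [] x = Kop h x" for x by (rule ext)+ (simp add: DRop_Nil)
  show ?case unfolding eqn_def e using RE_base[of g l u h] by simp
next
  case (snoc m mu)
  let ?L = "length mu"
  have Ln: "?L < n" using snoc.prems by simp
  note IH = snoc.IH[OF less_imp_le[OF Ln]]
  let ?Ua = "Ua g h mu l" and ?Ub = "Ub g h mu u"
  let ?aP = "RaL g (l+m) ?L" and ?aM = "RaL g (l-m) ?L"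
  let ?bP = "RbL g (u+m) ?L" and ?bM = "RbL g (u-m) ?L"
  have cA: "?Ua (liftB (Rop g y ?L) w) = liftB (Rop g y ?L) (?Ua w)" for y w
    by (rule comm_DRopA) simp
  have cB: "?Ub (liftA (Rop g y ?L) w) = liftA (Rop g y ?L) (?Ub w)" for y w
    by (rule comm_DRopB) simp
  have "eqn n (Rab g (l-u) (?aM (?Ua (?aP (Rab g (l+u) (?bM (?Ub (?bP v))))))))
              (Rab g (l-u) (?aM (?Ua (?bM (Rab g (l+u) (?aP (?Ub (?bP v))))))))"
    by (intro eqn_intros YA_eqn Ln) simp
  also have "(Rab g (l-u) (?aM (?Ua (?bM (Rab g (l+u) (?aP (?Ub (?bP v))))))))
      = Rab g (l-u) (?aM (?bM (?Ua (Rab g (l+u) (?Ub (?aP (?bP v)))))))"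
    by (simp add: cA cB)
  also have "eqn n \<dots> (?bM (?aM (Rab g (l-u) (?Ua (Rab g (l+u) (?Ub (?aP (?bP v))))))))"
    by (intro YB_eqn Ln) simp
  also have "eqn n \<dots> (?bM (?aM (?Ub (Rab g (l+u) (?Ua (Rab g (l-u) (?aP (?bP v))))))))"
    by (intro eqn_intros IH)
  also have "eqn n \<dots> (?bM (?aM (?Ub (Rab g (l+u) (?Ua (?bP (?aP (Rab g (l-u) v))))))))"
    by (intro eqn_intros YB_eqn Ln) simp
  also have "(?bM (?aM (?Ub (Rab g (l+u) (?Ua (?bP (?aP (Rab g (l-u) v))))))))
     = ?bM (?Ub (?aM (Rab g (l+u) (?bP (?Ua (?aP (Rab g (l-u) v)))))))"
    by (simp add: cA cB)
  also have "eqn n \<dots> (?bM (?Ub (?bP (Rab g (l+u) (?aM (?Ua (?aP (Rab g (l-u) v))))))))"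
    by (intro eqn_intros YA_eqn Ln) simp
  finally show ?case
    by (simp add: Ua_snoc Ub_snoc)
qed

definition lin :: "(avec \<Rightarrow> avec) \<Rightarrow> bool" where
  "lin F \<longleftrightarrow> (\<forall>c1 c2 v w. F (\<lambda>a s. c1 * v a s + c2 * w a s) = (\<lambda>a s. c1 * F v a s + c2 * F w a s))"

lemma lin_Rop: "lin (Rop g x p)"
  unfolding lin_def Rop_def
  by (simp add: fun_eq_iff sum_distrib_left sum.distrib algebra_simps)

lemma lin_Kop: "lin (Kop h x)"
  unfolding lin_def Kop_def
  by (simp add: fun_eq_iff algebra_simps)

lemma lin_comp: assumes "lin F" "lin G" shows "lin (\<lambda>v. F (G v))"
  using assms unfolding lin_def by simp

lemma lin_fold: "(\<And>p. p \<in> set ps \<Longrightarrow> lin (f p)) \<Longrightarrow> lin (fold f ps)"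
proof (induction ps)
  case Nil then show ?case by (simp add: lin_def)
next
  case (Cons p ps)
  then have "lin (\<lambda>v. fold f ps (f p v))"
    by (intro lin_comp[of "fold f ps" "f p"]) auto
  then show ?case by (simp add: comp_def)
qed

lemma DRop_eq: "DRop g h mu x = (\<lambda>v. fold (\<lambda>p w. Rop g (x - mu ! p) p w) [0..<length mu]
       (Kop h x (fold (\<lambda>p w. Rop g (x + mu ! p) p w) (rev [0..<length mu]) v)))"
  by (simp add: fun_eq_iff DRop_def)

lemma lin_DRop: "lin (DRop g h mu x)"
proof -
  let ?F1 = "fold (\<lambda>p w. Rop g (x - mu ! p) p w) [0..<length mu]"
  let ?F2 = "fold (\<lambda>p w. Rop g (x + mu ! p) p w) (rev [0..<length mu])"
  have "lin ?F1" by (rule lin_fold) (rule lin_Rop)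
  moreover have "lin ?F2" by (rule lin_fold) (rule lin_Rop)
  ultimately show ?thesis unfolding DRop_eq
    by (intro lin_comp[of ?F1 "\<lambda>v. Kop h x (?F2 v)"] lin_comp[of "Kop h x" ?F2] lin_Kop)
qed

lemma linD: "lin F \<Longrightarrow> F (\<lambda>a s. c1 * v a s + c2 * w a s) a s = c1 * F v a s + c2 * F w a s"
  unfolding lin_def by simp

lemma lin_zero: assumes "lin F" shows "F (\<lambda>a s. 0) = (\<lambda>a s. 0)"
  using linD[OF assms, of 0 "\<lambda>a s. 0" 0 "\<lambda>a s. 0"] by (simp add: fun_eq_iff)

lemma lin_scale: assumes "lin F" shows "F (\<lambda>a s. c * v a s) a s = c * F v a s"
  using linD[OF assms, of c v 0 v] by simp

lemma lin_sum: assumes "lin F" "finite Q"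
  shows "F (\<lambda>a s. \<Sum>q\<in>Q. f q a s) a s = (\<Sum>q\<in>Q. F (f q) a s)"
  using assms(2)
proof (induction Q arbitrary: a s)
  case empty then show ?case using lin_zero[OF assms(1)] by simp
next
  case (insert q Q)
  have "F (\<lambda>a s. \<Sum>q\<in>insert q Q. f q a s) a s = F (\<lambda>a s. 1 * f q a s + 1 * (\<Sum>q\<in>Q. f q a s)) a s"
    using insert by simp
  also have "\<dots> = F (f q) a s + F (\<lambda>a s. \<Sum>q\<in>Q. f q a s) a s"
    using linD[OF assms(1), of 1 "f q" 1 "\<lambda>a s. \<Sum>q\<in>Q. f q a s" a s] by simp
  finally show ?case using insert by simp
qed

definition auxloc :: "(avec \<Rightarrow> avec) \<Rightarrow> bool" where
  "auxloc F \<longleftrightarrow> (\<forall>v w. (\<forall>a s. a \<le> 1 \<longrightarrow> v a s = w a s) \<longrightarrow> (\<forall>a s. a \<le> 1 \<longrightarrow> F v a s = F w a s))"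

lemma auxlocD: "auxloc F \<Longrightarrow> (\<And>a s. a \<le> 1 \<Longrightarrow> v a s = w a s) \<Longrightarrow> a \<le> 1 \<Longrightarrow> F v a s = F w a s"
  unfolding auxloc_def
  apply (drule_tac x=v in spec, drule_tac x=w in spec)
  by auto

lemma auxloc_Rop: "auxloc (Rop g x p)"
  unfolding auxloc_def
proof (intro allI impI)
  fix v w :: avec and a :: nat and s :: "nat list"
  assume H: "\<forall>a s. a \<le> 1 \<longrightarrow> v a s = w a s"
  show "Rop g x p v a s = Rop g x p w a s" unfolding Rop_def using H by simp
qed

lemma auxloc_Kop: "auxloc (Kop h x)"
  unfolding auxloc_def Kop_def by simp

lemma auxloc_comp: assumes F: "auxloc F" and G: "auxloc G" shows "auxloc (\<lambda>v. F (G v))"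
  unfolding auxloc_def
proof (intro allI impI)
  fix v w :: avec and a :: nat and s :: "nat list"
  assume H: "\<forall>a s. a \<le> 1 \<longrightarrow> v a s = w a s" and l: "a \<le> 1"
  have "G v a' s' = G w a' s'" if "a' \<le> 1" for a' s'
    using auxlocD[OF G _ that] H by blast
  then show "F (G v) a s = F (G w) a s"
    using auxlocD[OF F _ l] by blast
qed

lemma auxloc_fold: "(\<And>p. p \<in> set ps \<Longrightarrow> auxloc (f p)) \<Longrightarrow> auxloc (fold f ps)"
proof (induction ps)
  case Nil then show ?case by (simp add: auxloc_def)
next
  case (Cons p ps)
  then have "auxloc (\<lambda>v. fold f ps (f p v))"
    by (intro auxloc_comp[of "fold f ps" "f p"]) auto
  then show ?case by (simp add: comp_def)
qed

lemma auxloc_DRop: "auxloc (DRop g h mu x)"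
proof -
  let ?F1 = "fold (\<lambda>p w. Rop g (x - mu ! p) p w) [0..<length mu]"
  let ?F2 = "fold (\<lambda>p w. Rop g (x + mu ! p) p w) (rev [0..<length mu])"
  have "auxloc ?F1" by (rule auxloc_fold) (rule auxloc_Rop)
  moreover have "auxloc ?F2" by (rule auxloc_fold) (rule auxloc_Rop)
  ultimately show ?thesis unfolding DRop_eq
    by (intro auxloc_comp[of ?F1 "\<lambda>v. Kop h x (?F2 v)"] auxloc_comp[of "Kop h x" ?F2] auxloc_Kop)
qed

lemma DRop_decomp:
  assumes "i \<le> 1"
  shows "DRop g h mu x v i s = (\<Sum>e\<in>{0,1}. Top g h mu i e x (v e) s)"
proof -
  let ?V = "\<lambda>a s. \<Sum>e\<in>{0,1::nat}. (\<lambda>e t0 t. if t0 = e then v e t else 0) e a s"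
  have "DRop g h mu x v i s = DRop g h mu x ?V i s"
    by (rule auxlocD[OF auxloc_DRop _ assms]) auto
  also have "\<dots> = (\<Sum>e\<in>{0,1}. DRop g h mu x (\<lambda>t0 t. if t0 = e then v e t else 0) i s)"
    by (rule lin_sum[OF lin_DRop]) simp
  finally show ?thesis by (simp add: Top_def)
qed

lemma Top_sum: "finite Q \<Longrightarrow> Top g h mu i j x (\<lambda>s. \<Sum>q\<in>Q. f q s) = (\<lambda>s. \<Sum>q\<in>Q. Top g h mu i j x (f q) s)"
proof -
  assume Q: "finite Q"
  have "(\<lambda>t0 t. if t0 = j then \<Sum>q\<in>Q. f q t else 0) = (\<lambda>t0 t. \<Sum>q\<in>Q. (\<lambda>q t0 t. if t0 = j then f q t else 0) q t0 t)"
    by (simp add: fun_eq_iff)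
  then show ?thesis unfolding Top_def
    by (simp add: lin_sum[OF lin_DRop Q] fun_eq_iff)
qed

lemma Top_scale: "Top g h mu i j x (\<lambda>s. c * f s) = (\<lambda>s. c * Top g h mu i j x f s)"
proof -
  have "(\<lambda>t0 t. if t0 = j then c * f t else 0) = (\<lambda>t0 t. c * (\<lambda>t0 t. if t0 = j then f t else 0) t0 t)"
    by (simp add: fun_eq_iff)
  then show ?thesis unfolding Top_def
    by (simp add: lin_scale[OF lin_DRop] fun_eq_iff)
qed

lemma Top_add: "Top g h mu i j x (\<lambda>s. f1 s + f2 s) = (\<lambda>s. Top g h mu i j x f1 s + Top g h mu i j x f2 s)"
proof -
  have "(\<lambda>t0 t. if t0 = j then f1 t + f2 t else 0) = (\<lambda>t0 t. 1 * (\<lambda>t0 t. if t0 = j then f1 t else 0) t0 t + 1 * (\<lambda>t0 t. if t0 = j then f2 t else 0) t0 t)"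
    by (simp add: fun_eq_iff)
  then show ?thesis unfolding Top_def
    using linD[OF lin_DRop, of g h mu x 1 "\<lambda>t0 t. if t0 = j then f1 t else 0" 1 "\<lambda>t0 t. if t0 = j then f2 t else 0" i]
    by (simp add: fun_eq_iff)
qed

lemma Top_zero: "Top g h mu i j x (\<lambda>s. 0) = (\<lambda>s. 0)"
  using Top_scale[of g h mu i j x 0 "\<lambda>s. 0"] by simp

lemma RE_entry:
  assumes ij: "i1 \<le> 1" "i2 \<le> 1" "j1 \<le> 1" "j2 \<le> 1" and len: "length mu \<le> length s"
  shows "(\<Sum>k\<in>{0,1}. \<Sum>d\<in>{0,1}. Rmat g (l-u) i1 i2 k d *
           (\<Sum>e\<in>{0,1}. \<Sum>d'\<in>{0,1}. Rmat g (l+u) e d j1 d' * Top g h mu k e l (Top g h mu d' j2 u w) s))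
       = (\<Sum>f\<in>{0,1}. \<Sum>a'\<in>{0,1}. \<Sum>d\<in>{0,1}. Rmat g (l+u) i1 f a' d *
           (\<Sum>c\<in>{0,1}. Rmat g (l-u) c d j1 j2 * Top g h mu i2 f u (Top g h mu a' c l w) s))"
proof -
  define v :: bvec where "v = (\<lambda>c d s. if c = j1 \<and> d = j2 then w s else 0)"
  have j1: "j1 \<in> {0,1}" "j2 \<in> {0,1}" using ij by auto
  have ub: "Ub g h mu u v = (\<lambda>c d s'. if c = j1 then Top g h mu d j2 u w s' else 0)"
  proof (intro ext)
    fix c d s'
    show "Ub g h mu u v c d s' = (if c = j1 then Top g h mu d j2 u w s' else 0)"
    proof (cases "c = j1")
      case True then show ?thesis by (simp add: liftB_def v_def Top_def)
    next
      case False
      then have "(\<lambda>e s''. v c e s'') = (\<lambda>a s. 0)" by (simp add: v_def fun_eq_iff)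
      then show ?thesis using False by (simp add: liftB_def lin_zero[OF lin_DRop])
    qed
  qed
  define G where "G = (\<lambda>e d s'. \<Sum>d'\<in>{0,1}. Rmat g (l+u) e d j1 d' * Top g h mu d' j2 u w s')"
  have rg: "Rab g (l+u) (Ub g h mu u v) = G"
    unfolding ub G_def Rab_def using j1 by (auto simp: fun_eq_iff)
  have ua: "Ua g h mu l G k d s = (\<Sum>e\<in>{0,1}. \<Sum>d'\<in>{0,1}. Rmat g (l+u) e d j1 d' * Top g h mu k e l (Top g h mu d' j2 u w) s)"
    if "k \<le> 1" for k d
    unfolding liftA_def DRop_decomp[OF that] G_def
    by (simp add: Top_sum Top_scale Top_add)
  have lhs: "Rab g (l-u) (Ua g h mu l (Rab g (l+u) (Ub g h mu u v))) i1 i2 s =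
      (\<Sum>k\<in>{0,1}. \<Sum>d\<in>{0,1}. Rmat g (l-u) i1 i2 k d *
           (\<Sum>e\<in>{0,1}. \<Sum>d'\<in>{0,1}. Rmat g (l+u) e d j1 d' * Top g h mu k e l (Top g h mu d' j2 u w) s))"
    unfolding rg by (simp add: Rab_def ua)
  define H1 where "H1 = (\<lambda>c d s'. Rmat g (l-u) c d j1 j2 * w s')"
  have r1: "Rab g (l-u) v = H1"
    unfolding H1_def Rab_def v_def using j1 by (auto simp: fun_eq_iff)
  have ua2: "Ua g h mu l H1 a' d s' = (\<Sum>c\<in>{0,1}. Rmat g (l-u) c d j1 j2 * Top g h mu a' c l w s')"
    if "a' \<le> 1" for a' d s'
    unfolding liftA_def DRop_decomp[OF that] H1_def
    by (simp add: Top_scale Top_add)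
  define H2 where "H2 = (\<lambda>i f s'. \<Sum>a'\<in>{0,1}. \<Sum>d\<in>{0,1}. Rmat g (l+u) i f a' d *
           (\<Sum>c\<in>{0,1}. Rmat g (l-u) c d j1 j2 * Top g h mu a' c l w s'))"
  have r2: "Rab g (l+u) (Ua g h mu l H1) = H2"
    unfolding H2_def Rab_def by (simp add: ua2 fun_eq_iff)
  have rhs: "Ub g h mu u (Rab g (l+u) (Ua g h mu l (Rab g (l-u) v))) i1 i2 s =
      (\<Sum>f\<in>{0,1}. \<Sum>a'\<in>{0,1}. \<Sum>d\<in>{0,1}. Rmat g (l+u) i1 f a' d *
           (\<Sum>c\<in>{0,1}. Rmat g (l-u) c d j1 j2 * Top g h mu i2 f u (Top g h mu a' c l w) s))"
    unfolding r1 r2 liftB_def DRop_decomp[OF ij(2)] H2_def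
    by (simp add: Top_sum Top_scale Top_add sum_distrib_left)
  have "eqn (length s) (Rab g (l-u) (Ua g h mu l (Rab g (l+u) (Ub g h mu u v))))
         (Ub g h mu u (Rab g (l+u) (Ua g h mu l (Rab g (l-u) v))))"
    by (rule RE[OF len])
  then have "Rab g (l-u) (Ua g h mu l (Rab g (l+u) (Ub g h mu u v))) i1 i2 s =
     Ub g h mu u (Rab g (l+u) (Ua g h mu l (Rab g (l-u) v))) i1 i2 s"
    unfolding eqn_def by blast
  then show ?thesis using lhs rhs by simp
qed

context
  fixes g h :: complex and mu :: "complex list"
begin

abbreviation "AA x w \<equiv> Top g h mu 0 0 x w"
abbreviation "BB x w \<equiv> Top g h mu 0 1 x w"
abbreviation "CC x w \<equiv> Top g h mu 1 0 x w"
abbreviation "DD x w \<equiv> Top g h mu 1 1 x w"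

lemma E0010: "length mu \<le> length s \<Longrightarrow>
  fa g (l-m) * fb (l+m) * BB l (AA m w) s = fa g (l+m) * fb (l-m) * AA m (BB l w) s
     + fb (l+m) * sinh g * BB m (AA l w) s + sinh g * fb (l-m) * BB m (DD l w) s"
  using RE_entry[of 0 0 1 0 mu s g l m h w] by (simp add: Rmat_def algebra_simps)

lemma E1000: "length mu \<le> length s \<Longrightarrow>
  sinh g * fb (l+m) * AA l (CC m w) s + fb (l-m) * fa g (l+m) * CC l (AA m w) s
     + fb (l-m) * sinh g * DD l (CC m w) s = fb (l+m) * fa g (l-m) * AA m (CC l w) s"
  using RE_entry[of 1 0 0 0 mu s g l m h w] by (simp add: Rmat_def algebra_simps)

lemma E0011: "length mu \<le> length s \<Longrightarrow>
  fa g (l-m) * fb (l+m) * BB l (BB m w) s = fb (l+m) * fa g (l-m) * BB m (BB l w) s"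
  using RE_entry[of 0 0 1 1 mu s g l m h w] by (simp add: Rmat_def algebra_simps)

lemma E1100: "length mu \<le> length s \<Longrightarrow>
  fa g (l-m) * fb (l+m) * CC l (CC m w) s = fb (l+m) * fa g (l-m) * CC m (CC l w) s"
  using RE_entry[of 1 1 0 0 mu s g l m h w] by (simp add: Rmat_def algebra_simps)

lemma E1011: "length mu \<le> length s \<Longrightarrow>
  sinh g * sinh g * AA l (BB m w) s + sinh g * fa g (l+m) * BB l (DD m w) s
    + fb (l-m) * fb (l+m) * DD l (BB m w) s
  = sinh g * fa g (l-m) * AA m (BB l w) s + fa g (l+m) * fa g (l-m) * BB m (DD l w) s"
  using RE_entry[of 1 0 1 1 mu s g l m h w] by (simp add: Rmat_def algebra_simps)

lemma E1110: "length mu \<le> length s \<Longrightarrow>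
  fa g (l-m) * sinh g * CC l (AA m w) s + fa g (l-m) * fa g (l+m) * DD l (CC m w) s
  = sinh g * sinh g * CC m (AA l w) s + fb (l+m) * fb (l-m) * CC m (DD l w) s
    + fa g (l+m) * sinh g * DD m (CC l w) s"
  using RE_entry[of 1 1 1 0 mu s g l m h w] by (simp add: Rmat_def algebra_simps)

end

definition cfam :: "(complex \<Rightarrow> avec) \<Rightarrow> bool" where
  "cfam V \<longleftrightarrow> (\<forall>a s. continuous_on UNIV (\<lambda>x. V x a s))"

lemma cont_if_const[continuous_intros]:
  "continuous_on S F \<Longrightarrow> continuous_on S G \<Longrightarrow> continuous_on S (\<lambda>x. if P then F x else G x)"
  by (cases P) auto

lemma cont_Rmat: "continuous_on UNIV f \<Longrightarrow> continuous_on UNIV (\<lambda>x. Rmat g (f x) i j k l)"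
  unfolding Rmat_def fa_def fb_def by (auto intro!: continuous_intros)

lemma cfam_Rop: "cfam V \<Longrightarrow> continuous_on UNIV f \<Longrightarrow> cfam (\<lambda>x. Rop g (f x) p (V x))"
  unfolding cfam_def Rop_def by (auto intro!: continuous_intros cont_Rmat)

lemma cfam_Kop: "cfam V \<Longrightarrow> continuous_on UNIV f \<Longrightarrow> cfam (\<lambda>x. Kop h (f x) (V x))"
  unfolding cfam_def Kop_def by (auto intro!: continuous_intros)

lemma cfam_fold:
  assumes "\<And>p V. cfam V \<Longrightarrow> cfam (\<lambda>x. F p x (V x))" "cfam V"
  shows "cfam (\<lambda>x. fold (\<lambda>p w. F p x w) ps (V x))"
  using assms(2)
proof (induction ps arbitrary: V)
  case Nil then show ?case by simp
next
  case (Cons p ps)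
  have "cfam (\<lambda>x. F p x (V x))" using assms(1) Cons.prems by blast
  from Cons.IH[OF this] show ?case by simp
qed

lemma cfam_DRop: "cfam V \<Longrightarrow> continuous_on UNIV f \<Longrightarrow> cfam (\<lambda>x. DRop g h mu (f x) (V x))"
  unfolding DRop_def
  apply (rule cfam_fold[where F = "\<lambda>p x w. Rop g (f x - mu ! p) p w"])
   apply (rule cfam_Rop, assumption, intro continuous_intros, assumption)
  apply (rule cfam_Kop[where f = f, OF _ ], rule cfam_fold[where F = "\<lambda>p x w. Rop g (f x + mu ! p) p w"])
    apply (rule cfam_Rop, assumption, intro continuous_intros, assumption)
  by assumption+

lemma cont_Top:
  fixes W :: "complex \<Rightarrow> qvec"
  assumes "\<And>s. continuous_on UNIV (\<lambda>x. W x s)" "continuous_on UNIV f"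
  shows "continuous_on UNIV (\<lambda>x. Top g h mu i j (f x) (W x) s)"
proof -
  have "cfam (\<lambda>x t0 t. if t0 = j then W x t else 0)"
    unfolding cfam_def using assms(1) by (auto intro!: continuous_intros)
  from cfam_DRop[OF this assms(2)] show ?thesis
    unfolding cfam_def Top_def by blast
qed

lemma sinh_zero_Re: "sinh (w::complex) = 0 \<Longrightarrow> Re w = 0"
proof -
  assume "sinh w = 0"
  then have "exp w = exp (-w)" by (simp add: sinh_def scaleR_conv_of_real)
  then have "norm (exp w) = norm (exp (-w))" by simp
  then have "exp (Re w) = exp (- Re w)" by (simp add: norm_exp_eq_Re)
  then show "Re w = 0" by simp
qed

lemma approx_zero:
  fixes f :: "complex \<Rightarrow> complex"
  assumes cont: "continuous_on UNIV f"
    and ks: "\<forall>(k,c)\<in>set ps. k \<noteq> 0"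
    and H: "\<And>z. (\<forall>(k,c)\<in>set ps. sinh (of_real k * z + c) \<noteq> 0) \<Longrightarrow> f z = 0"
  shows "f z0 = 0"
proof -
  define bad where "bad = (\<lambda>(k,c). - Re (of_real k * z0 + c) / k) ` set ps"
  have fb: "finite bad" unfolding bad_def by simp
  define t where "t = (\<lambda>n::nat. 1 / real (Suc n))"
  have tinj: "inj t" unfolding t_def inj_def by simp
  have fin: "finite {n. t n \<in> bad}"
    using finite_vimageI[OF fb tinj] by (simp add: vimage_def)
  have ev: "eventually (\<lambda>n. t n \<notin> bad) sequentially"
  proof -
    obtain N where "\<forall>n\<in>{n. t n \<in> bad}. n < N"
      using fin finite_nat_set_iff_bounded by blast
    then show ?thesis unfolding eventually_sequentially by (metis mem_Collect_eq not_le)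
  qed
  have ev2: "eventually (\<lambda>n. f (z0 + of_real (t n)) = 0) sequentially"
    using ev
  proof (rule eventually_mono)
    fix n assume nb: "t n \<notin> bad"
    show "f (z0 + of_real (t n)) = 0"
    proof (rule H, intro ballI, clarify)
      fix k c assume kc: "(k, c) \<in> set ps" and z: "sinh (of_real k * (z0 + of_real (t n)) + c) = 0"
      have k0: "k \<noteq> 0" using ks kc by auto
      from sinh_zero_Re[OF z] have "Re (of_real k * z0 + c) + k * t n = 0"
        by (simp add: algebra_simps)
      then have "t n = - Re (of_real k * z0 + c) / k" using k0 by (simp add: field_simps)
      then have "t n \<in> bad" unfolding bad_def using kc by force
      then show False using nb by simp
    qed
  qed
  have tl: "t \<longlonglongrightarrow> 0" unfolding t_def
    using LIMSEQ_inverse_real_of_nat by (simp add: inverse_eq_divide)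
  have "(\<lambda>n. z0 + of_real (t n)) \<longlonglongrightarrow> z0 + of_real 0"
    by (intro tendsto_intros tl)
  moreover have "isCont f z0"
    using cont by (simp add: continuous_on_eq_continuous_at)
  ultimately have "(\<lambda>n. f (z0 + of_real (t n))) \<longlonglongrightarrow> f z0"
    using isCont_tendsto_compose by fastforce
  moreover have "(\<lambda>n. f (z0 + of_real (t n))) \<longlonglongrightarrow> 0"
    using tendsto_eventually[OF ev2] .
  ultimately show ?thesis using LIMSEQ_unique by blast
qed

definition al :: "complex \<Rightarrow> complex \<Rightarrow> complex \<Rightarrow> complex" where
  "al g x y = fa g (y-x) * fb (x+y) / (fb (y-x) * fa g (x+y))"
definition be :: "complex \<Rightarrow> complex \<Rightarrow> complex \<Rightarrow> complex" where
  "be g x y = sinh g * fb (2*y) / (fb (x-y) * fa g (2*y))"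
definition ga :: "complex \<Rightarrow> complex \<Rightarrow> complex \<Rightarrow> complex" where
  "ga g x y = - sinh g / fa g (x+y)"
definition alp :: "complex \<Rightarrow> complex \<Rightarrow> complex \<Rightarrow> complex" where
  "alp g x y = fa g (x-y) * fa g (x+y+g) / (fb (x-y) * fb (x+y+g))"
definition bep :: "complex \<Rightarrow> complex \<Rightarrow> complex \<Rightarrow> complex" where
  "bep g x y = - sinh g * fa g (2*x+g) / (fb (2*x+g) * fb (x-y))"
definition gap :: "complex \<Rightarrow> complex \<Rightarrow> complex \<Rightarrow> complex" where
  "gap g x y = sinh g * fb (2*y) * fa g (2*x+g) / (fa g (2*x) * fa g (2*y) * fa g (x+y))"

definition gen :: "complex \<Rightarrow> complex \<Rightarrow> complex \<Rightarrow> bool" where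
  "gen g x y \<longleftrightarrow> fb (x-y) \<noteq> 0 \<and> fa g (x+y) \<noteq> 0 \<and> fa g (2*x) \<noteq> 0 \<and> fa g (2*y) \<noteq> 0"

lemma fb_swap: "fb (y - x) = - fb (x - y)"
  unfolding fb_def by (metis minus_diff_eq sinh_minus)

lemma trigT1: "fb (y+x) * fa g (2*y) + sinh g * fb (y-x) = fb (2*y) * fa g (y+x)"
  unfolding fa_def fb_def
  apply (simp only: trig_simps)
  by (simp add: field_simps)

lemma AB_abs:
  fixes P Q X Y a1 a2 b1 b2 c A2 B2 :: complex
  assumes e: "a1 * b2 * Q = a2 * b1 * P + b2 * c * X + c * b1 * Y"
  and T: "B2 = (b2 * A2 + c * b1) / a2"
  and nz: "a2 \<noteq> 0" "b1 \<noteq> 0" "A2 \<noteq> 0"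
  shows "P = a1 * b2 / (b1 * a2) * Q + c * B2 / ((- b1) * A2) * X + (- c / a2) * (Y - c / A2 * X)"
proof -
  have P: "P = (a1 * b2 * Q - b2 * c * X - c * b1 * Y) / (a2 * b1)"
    using e nz by (simp add: field_simps)
  show ?thesis unfolding P T using nz by (simp add: field_simps)
qed

lemma AB_scalar:
  fixes P Q X Y x y g :: complex
  assumes e: "fa g (y-x) * fb (y+x) * Q = fa g (y+x) * fb (y-x) * P + fb (y+x) * sinh g * X + sinh g * fb (y-x) * Y"
  and nz: "fb (x-y) \<noteq> 0" "fa g (x+y) \<noteq> 0" "fa g (2*y) \<noteq> 0"
  shows "P = al g x y * Q + be g x y * X + ga g x y * (Y - sinh g / fa g (2*y) * X)"
proof -
  have n1: "fb (y-x) \<noteq> 0" using nz(1) fb_swap[of y x] by simp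
  have n2: "fa g (y+x) \<noteq> 0" using nz(2) by (simp add: add.commute)
  have T: "fb (2*y) = (fb (y+x) * fa g (2*y) + sinh g * fb (y-x)) / fa g (y+x)"
  proof -
    have "fb (2*y) * fa g (y+x) = fb (y+x) * fa g (2*y) + sinh g * fb (y-x)"
      using trigT1[of y x g] by (rule sym)
    then show ?thesis using n2 by (simp add: eq_divide_eq)
  qed
  have "P = fa g (y-x) * fb (y+x) / (fb (y-x) * fa g (y+x)) * Q + sinh g * fb (2*y) / ((- fb (y-x)) * fa g (2*y)) * X + (- sinh g / fa g (y+x)) * (Y - sinh g / fa g (2*y) * X)"
    by (rule AB_abs[OF e T n2 n1 nz(3)])
  moreover have "- fb (y - x) = fb (x - y)" using fb_swap[of x y] by simp
  ultimately show ?thesis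
    unfolding al_def be_def ga_def by (simp only: add.commute[of y x])
qed

lemma fbs: "fb (x - y) = - fb (y - x)" by (rule fb_swap)
lemma fb_g2: "fb (2*x+g) = fa g (2*x)" by (simp add: fa_def fb_def)
lemma fa_c: "fa g (y+x) = fa g (x+y)" by (simp add: add.commute)
lemma fb_c: "fb (y+x) = fb (x+y)" by (simp add: add.commute)
lemma fbg_c: "fb (z+y+g) = fa g (y+z)" by (simp add: fa_def fb_def add_ac)
lemma fag_c: "fa g (z+y+g) = fa g (y+z+g)" by (simp add: fa_def add_ac)

lemma gen_nz:
  assumes "gen g x y"
  shows "fb (x-y) \<noteq> 0" "fb (y-x) \<noteq> 0" "fa g (x+y) \<noteq> 0" "fa g (y+x) \<noteq> 0"
    "fa g (2*x) \<noteq> 0" "fa g (2*y) \<noteq> 0" "fb (x+y+g) \<noteq> 0" "fb (2*x+g) \<noteq> 0" "fb (2*y+g) \<noteq> 0"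
  using assms fbs[of x y] unfolding gen_def
  by (auto simp: add.commute fa_def fb_def)

lemma gen_sym: "gen g x y \<Longrightarrow> gen g y x"
  unfolding gen_def using fbs[of x y] by (auto simp: add.commute)

lemma I1_abs:
  fixes c A_2y A_yx B_xpy B_yx A_xpy B_2z B_xz A_2z B_2y B_yz A_2yg A_ypz A_yz B_ypz :: complex
  assumes n: "B_yx \<noteq> 0" "A_xpy \<noteq> 0" "B_xz \<noteq> 0" "A_2z \<noteq> 0" "A_2y \<noteq> 0" "B_yz \<noteq> 0" "A_ypz \<noteq> 0"
  and P: "A_2y*A_yx*B_xpy*B_yz*A_ypz - A_2y*A_yz*B_ypz*B_yx*A_xpy - c*B_2y*A_xpy*A_ypz*B_xz - c*A_2yg*B_yx*B_yz*B_xz = 0"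
  shows "(A_yx*B_xpy/(B_yx*A_xpy)) * (c*B_2z/(B_xz*A_2z)) + (c*B_2y/((-B_yx)*A_2y)) * (c*B_2z/(B_yz*A_2z))
     + (-c/A_xpy) * (c*B_2z*A_2yg/(A_2y*A_2z*A_ypz)) = (c*B_2z/(B_xz*A_2z)) * (A_yz*B_ypz/(B_yz*A_ypz))"
  using n
  apply (simp add: field_simps)
  using P by algebra

lemma P1: "fa g (2*y)*fa g (y-x)*fb (x+y)*fb (y-z)*fa g (y+z) - fa g (2*y)*fa g (y-z)*fb (y+z)*fb (y-x)*fa g (x+y)
   - sinh g*fb (2*y)*fa g (x+y)*fa g (y+z)*fb (x-z) - sinh g*fa g (2*y+g)*fb (y-x)*fb (y-z)*fb (x-z) = 0"
  unfolding fa_def fb_def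
  apply (simp only: trig_simps)
  by (simp add: field_simps)

lemma I1:
  assumes "gen g x y" "gen g x z" "gen g y z"
  shows "al g x y * be g x z + be g x y * be g y z + ga g x y * gap g y z = be g x z * al g z y"
proof -
  note n = gen_nz[OF assms(1)] gen_nz[OF assms(2)] gen_nz[OF assms(3)]
  show ?thesis
    unfolding al_def be_def ga_def gap_def fbs[of x y] fb_c[where y=z and x=y] fa_c[where y=z and x=y]
    by (rule I1_abs[OF _ _ _ _ _ _ _ P1]) (use n in auto)
qed

lemma I2_abs:
  fixes c ayx bxy a2y ayz byz b2y axz axy a2yg byx azy ayzg :: complex
  assumes n: "byx \<noteq> 0" "axy \<noteq> 0" "a2y \<noteq> 0" "byz \<noteq> 0" "axz \<noteq> 0" "ayz \<noteq> 0"
  and P: "ayx * bxy * a2y * ayz * byz - c * b2y * axz * axy * byz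
   - c * a2yg * axz * byx * ayz + azy * ayzg * a2y * byx * axy = 0"
  shows "(ayx * bxy / (byx * axy)) * (- c / axz) + (c * b2y / ((- byx) * a2y)) * (- c / ayz)
     + (- c / axy) * (- c * a2yg / (a2y * byz)) = (- c / axz) * (azy * ayzg / ((- byz) * ayz))"
  using n
  apply (simp add: field_simps)
  using P by algebra

lemma P2: "fa g (y-x) * fb (x+y) * fa g (2*y) * fa g (y+z) * fb (y-z) - sinh g * fb (2*y) * fa g (x+z) * fa g (x+y) * fb (y-z)
   - sinh g * fa g (2*y+g) * fa g (x+z) * fb (y-x) * fa g (y+z) + fa g (z-y) * fa g (y+z+g) * fa g (2*y) * fb (y-x) * fa g (x+y) = 0"
  unfolding fa_def fb_def
  apply (simp only: trig_simps)
  by (simp add: field_simps)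

lemma I2:
  assumes "gen g x y" "gen g x z" "gen g y z"
  shows "al g x y * ga g x z + be g x y * ga g y z + ga g x y * bep g y z = ga g x z * alp g z y"
proof -
  note n = gen_nz[OF assms(1)] gen_nz[OF assms(2)] gen_nz[OF assms(3)]
  show ?thesis
    unfolding al_def be_def ga_def bep_def alp_def fbs[of x y] fb_g2 fbs[of z y] fbg_c[where z=z and y=y] fag_c[where z=z and y=y]
    by (rule I2_abs[OF _ _ _ _ _ _ P2]) (use n in auto)
qed

lemma I3_abs:
  fixes c A_2y A_xy A_xpyg B_zy A_ypz A_zy A_ypzg B_xy A_xpy A_2yg B_xz B_2y A_2xg A_2x :: complex
  assumes n: "B_xy \<noteq> 0" "A_xpy \<noteq> 0" "A_2x \<noteq> 0" "B_xz \<noteq> 0" "A_2y \<noteq> 0" "B_zy \<noteq> 0" "A_ypz \<noteq> 0"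
  and P: "A_2y*A_xy*A_xpyg*B_zy*A_ypz - A_2y*A_zy*A_ypzg*B_xy*A_xpy + c*A_2yg*A_xpy*A_ypz*B_xz + c*B_2y*B_xy*B_zy*B_xz = 0"
  shows "(A_xy*A_xpyg/(B_xy*A_xpy)) * (-c*A_2xg/(A_2x*B_xz)) + (-c*A_2xg/(A_2x*B_xy)) * (-c*A_2yg/(A_2y*(-B_zy)))
     + (c*B_2y*A_2xg/(A_2x*A_2y*A_xpy)) * (-c/A_ypz) = (-c*A_2xg/(A_2x*B_xz)) * (A_zy*A_ypzg/(B_zy*A_ypz))"
  using n
  apply (simp add: field_simps)
  using P by algebra

lemma P3: "fa g (2*y)*fa g (x-y)*fa g (x+y+g)*fb (z-y)*fa g (y+z) - fa g (2*y)*fa g (z-y)*fa g (y+z+g)*fb (x-y)*fa g (x+y)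
   + sinh g*fa g (2*y+g)*fa g (x+y)*fa g (y+z)*fb (x-z) + sinh g*fb (2*y)*fb (x-y)*fb (z-y)*fb (x-z) = 0"
  unfolding fa_def fb_def
  apply (simp only: trig_simps)
  by (simp add: field_simps)

lemma I3:
  assumes "gen g x y" "gen g x z" "gen g y z"
  shows "alp g x y * bep g x z + bep g x y * bep g y z + gap g x y * ga g y z = bep g x z * alp g z y"
proof -
  note n = gen_nz[OF assms(1)] gen_nz[OF assms(2)] gen_nz[OF assms(3)]
  have e: "fb (x+y+g) = fa g (x+y)" by (simp add: fa_def fb_def)
  show ?thesis
    unfolding alp_def bep_def gap_def ga_def e fb_g2 fbs[of y z] fbg_c[where z=z and y=y] fag_c[where z=z and y=y]
    by (rule I3_abs[OF _ _ _ _ _ _ _ P3]) (use n fbs[of y z] in auto)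
qed

lemma I4_abs:
  fixes c A_2y A_xy A_xpyg B_yz A_ypz A_yz B_ypz B_xy A_xpy A_2yg A_xpz B_2y B_2z A_2z A_2xg A_2x :: complex
  assumes n: "B_xy \<noteq> 0" "A_xpy \<noteq> 0" "A_2x \<noteq> 0" "A_2z \<noteq> 0" "A_xpz \<noteq> 0" "A_2y \<noteq> 0" "A_ypz \<noteq> 0" "B_yz \<noteq> 0"
  and P: "A_2y*(A_xy*A_xpyg*B_yz*A_ypz - A_yz*B_ypz*B_xy*A_xpy) - c*A_2yg*A_xpy*B_yz*A_xpz + c*B_2y*B_xy*A_ypz*A_xpz = 0"
  shows "(A_xy*A_xpyg/(B_xy*A_xpy)) * (c*B_2z*A_2xg/(A_2x*A_2z*A_xpz)) + (-c*A_2xg/(A_2x*B_xy)) * (c*B_2z*A_2yg/(A_2y*A_2z*A_ypz))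
     + (c*B_2y*A_2xg/(A_2x*A_2y*A_xpy)) * (c*B_2z/(B_yz*A_2z)) = (c*B_2z*A_2xg/(A_2x*A_2z*A_xpz)) * (A_yz*B_ypz/(B_yz*A_ypz))"
  using n
  apply (simp add: field_simps)
  using P by algebra

lemma P4: "fa g (2*y)*(fa g (x-y)*fa g (x+y+g)*fb (y-z)*fa g (y+z) - fa g (y-z)*fb (y+z)*fb (x-y)*fa g (x+y))
   - sinh g*fa g (2*y+g)*fa g (x+y)*fb (y-z)*fa g (x+z) + sinh g*fb (2*y)*fb (x-y)*fa g (y+z)*fa g (x+z) = 0"
  unfolding fa_def fb_def
  apply (simp only: trig_simps)
  by (simp add: field_simps)

lemma I4:
  assumes "gen g x y" "gen g x z" "gen g y z"
  shows "alp g x y * gap g x z + bep g x y * gap g y z + gap g x y * be g y z = gap g x z * al g z y"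
proof -
  note n = gen_nz[OF assms(1)] gen_nz[OF assms(2)] gen_nz[OF assms(3)]
  have e: "fb (x+y+g) = fa g (x+y)" by (simp add: fa_def fb_def)
  show ?thesis
    unfolding alp_def bep_def gap_def be_def al_def e fb_g2 fb_c[where y=z and x=y] fa_c[where y=z and x=y]
    by (rule I4_abs[OF _ _ _ _ _ _ _ _ P4]) (use n in auto)
qed

lemma DB_abs:
  fixes c Axy Amy Bmy Bpy A2x A2y B2x B2y Ag2x Agxy Ayx P P' Z U1 U2 U3 U4 :: complex
  assumes n: "Bmy \<noteq> 0" "Bpy \<noteq> 0" "Axy \<noteq> 0" "A2x \<noteq> 0" "A2y \<noteq> 0"
  and K: "c*A2x + Bmy*Bpy = Axy*Amy"
  and J1: "Axy*Axy - c*c = Agxy*Bpy"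
  and J2: "Axy*A2x - c*Amy = Bpy*Ag2x"
  and J3: "-c*B2x*Axy + c*c*Bmy + Ayx*Bpy*Axy + Bpy*Agxy*Bmy = 0"
  and J4: "Amy*Amy*Bpy*A2x*A2y - Axy*Amy*(c*B2y*Axy + c*c*Bmy) - Bmy*Bpy*(c*Ag2x*Axy + B2y*Ag2x*Bmy) = 0"
  and E: "c*c*P + c*Axy*U3 + Bmy*Bpy*Z = c*Amy*P' + Axy*Amy*U4"
  and AB1: "P = (Ayx*Bpy/((-Bmy)*Axy))*U1 + (c*B2y/(Bmy*A2y))*U2 + (-c/Axy)*(U3 - c/A2y*U2)"
  and AB2: "P' = (Amy*Bpy/(Bmy*Axy))*U2 + (c*B2x/((-Bmy)*A2x))*U1 + (-c/Axy)*(U4 - c/A2x*U1)"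
  shows "Z - c/A2x*P = (Amy*Agxy/(Bmy*Axy))*(U4 - c/A2x*U1) + (-c*Ag2x/(A2x*Bmy))*(U3 - c/A2y*U2)
           + (c*B2y*Ag2x/(A2x*A2y*Axy))*U2"
proof -
  define Q where "Q = Bmy*Bpy"
  have Qn: "Q \<noteq> 0" using n by (simp add: Q_def)
  have Z: "Z = (c*Amy*P' + Axy*Amy*U4 - c*c*P - c*Axy*U3) / Q"
    using E Qn unfolding Q_def by (simp add: field_simps)
  define P1 where "P1 = Ayx*Bpy/((-Bmy)*Axy)"
  define P2 where "P2 = c*B2y/(Bmy*A2y) + (-c/Axy)*(- c/A2y)"
  define P3 where "P3 = -c/Axy"
  define Q2 where "Q2 = Amy*Bpy/(Bmy*Axy)"
  define Q1 where "Q1 = c*B2x/((-Bmy)*A2x) + (-c/Axy)*(- c/A2x)"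
  define Q4 where "Q4 = -c/Axy"
  have AB1': "P = P1*U1 + P2*U2 + P3*U3"
    unfolding AB1 P1_def P2_def P3_def by (simp add: algebra_simps)
  have AB2': "P' = Q1*U1 + Q2*U2 + Q4*U4"
    unfolding AB2 Q1_def Q2_def Q4_def by (simp add: algebra_simps)
  have lhs: "Z - c/A2x*P = ((c*Amy*Q1 - c*c*P1 - Q*c/A2x*P1)/Q)*U1 + ((c*Amy*Q2 - c*c*P2 - Q*c/A2x*P2)/Q)*U2
        + ((- c*c*P3 - c*Axy - Q*c/A2x*P3)/Q)*U3 + ((c*Amy*Q4 + Axy*Amy)/Q)*U4"
    unfolding Z AB1' AB2' using Qn n by (simp add: field_simps)
  have c4: "(c*Amy*Q4 + Axy*Amy)/Q = Amy*Agxy/(Bmy*Axy)"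
    unfolding Q4_def Q_def using n J1
    by (simp add: field_simps)
  have c3: "(- c*c*P3 - c*Axy - Q*c/A2x*P3)/Q = -c*Ag2x/(A2x*Bmy)"
    unfolding P3_def Q_def using n
    apply (simp add: field_simps)
    using K J2 by algebra
  have c1: "(c*Amy*Q1 - c*c*P1 - Q*c/A2x*P1)/Q = - (Amy*Agxy/(Bmy*Axy))*(c/A2x)"
    unfolding P1_def Q1_def Q_def using n
    apply (simp add: field_simps)
    using K J3 by algebra
  have c2: "(c*Amy*Q2 - c*c*P2 - Q*c/A2x*P2)/Q = (-c*Ag2x/(A2x*Bmy))*(-c/A2y) + c*B2y*Ag2x/(A2x*A2y*Axy)"
    unfolding P2_def Q2_def Q_def using n
    apply (simp add: field_simps)
    using K J4 by algebra
  show ?thesis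
    unfolding lhs c1 c2 c3 c4 using n by (simp add: field_simps)
qed

lemma tK: "sinh g * fa g (2*x) + fb (x-y) * fb (x+y) = fa g (x+y) * fa g (x-y)"
  unfolding fa_def fb_def apply (simp only: trig_simps) by (simp add: field_simps)
lemma tJ1: "fa g (x+y) * fa g (x+y) - sinh g * sinh g = fa g (x+y+g) * fb (x+y)"
  unfolding fa_def fb_def apply (simp only: trig_simps) by (simp add: field_simps)
lemma tJ2: "fa g (x+y) * fa g (2*x) - sinh g * fa g (x-y) = fb (x+y) * fa g (2*x+g)"
  unfolding fa_def fb_def apply (simp only: trig_simps) by (simp add: field_simps)
lemma tJ3: "- sinh g * fb (2*x) * fa g (x+y) + sinh g * sinh g * fb (x-y) + fa g (y-x) * fb (x+y) * fa g (x+y)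
   + fb (x+y) * fa g (x+y+g) * fb (x-y) = 0"
  unfolding fa_def fb_def apply (simp only: trig_simps) by (simp add: field_simps)
lemma tJ4: "fa g (x-y)*fa g (x-y)*fb (x+y)*fa g (2*x)*fa g (2*y)
   - fa g (x+y)*fa g (x-y)*(sinh g*fb (2*y)*fa g (x+y) + sinh g*sinh g*fb (x-y))
   - fb (x-y)*fb (x+y)*(sinh g*fa g (2*x+g)*fa g (x+y) + fb (2*y)*fa g (2*x+g)*fb (x-y)) = 0"
  unfolding fa_def fb_def apply (simp only: trig_simps) by (simp add: field_simps)

definition Dt :: "complex \<Rightarrow> complex \<Rightarrow> complex list \<Rightarrow> complex \<Rightarrow> qvec \<Rightarrow> qvec" where
  "Dt g h mu x w = (\<lambda>s. Top g h mu 1 1 x w s - sinh g / fa g (2*x) * Top g h mu 0 0 x w s)"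

lemma Top_Dt: "Top g h mu i j z (Dt g h mu x w) s
   = Top g h mu i j z (Top g h mu 1 1 x w) s - sinh g / fa g (2*x) * Top g h mu i j z (Top g h mu 0 0 x w) s"
proof -
  define k where "k = - (sinh g / fa g (2*x))"
  have "Dt g h mu x w = (\<lambda>s. Top g h mu 1 1 x w s + k * Top g h mu 0 0 x w s)"
    unfolding Dt_def k_def by simp
  then have "Top g h mu i j z (Dt g h mu x w) s
     = Top g h mu i j z (Top g h mu 1 1 x w) s + k * Top g h mu i j z (Top g h mu 0 0 x w) s"
    by (simp only: Top_add Top_scale)
  then show ?thesis unfolding k_def by simp
qed

context
  fixes g h :: complex and mu :: "complex list"
begin

abbreviation "TA x w \<equiv> Top g h mu 0 0 x w"
abbreviation "TB x w \<equiv> Top g h mu 0 1 x w"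
abbreviation "TC x w \<equiv> Top g h mu 1 0 x w"
abbreviation "TD x w \<equiv> Top g h mu 1 1 x w"
abbreviation "TDt x w \<equiv> Dt g h mu x w"

lemma relAB:
  assumes gen: "gen g x y" and len: "length mu \<le> length s"
  shows "TA x (TB y w) s = al g x y * TB y (TA x w) s + be g x y * TB x (TA y w) s + ga g x y * TB x (TDt y w) s"
proof -
  note n = gen_nz[OF gen]
  have e: "fa g (y-x) * fb (y+x) * TB y (TA x w) s = fa g (y+x) * fb (y-x) * TA x (TB y w) s
     + fb (y+x) * sinh g * TB x (TA y w) s + sinh g * fb (y-x) * TB x (TD y w) s"
    using E0010[OF len, of g y x h w] .
  show ?thesis unfolding Top_Dt
    by (rule AB_scalar[OF e n(1) n(3) n(6)])
qed

lemma relCA: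
  assumes gen: "gen g x y" and len: "length mu \<le> length s"
  shows "TC y (TA x w) s = al g x y * TA x (TC y w) s + be g x y * TA y (TC x w) s + ga g x y * TDt y (TC x w) s"
proof -
  note n = gen_nz[OF gen]
  have e0: "sinh g * fb (y+x) * TA y (TC x w) s + fb (y-x) * fa g (y+x) * TC y (TA x w) s
     + fb (y-x) * sinh g * TD y (TC x w) s = fb (y+x) * fa g (y-x) * TA x (TC y w) s"
    using E1000[OF len, of g y x h w] .
  have e: "fa g (y-x) * fb (y+x) * TA x (TC y w) s = fa g (y+x) * fb (y-x) * TC y (TA x w) s
     + fb (y+x) * sinh g * TA y (TC x w) s + sinh g * fb (y-x) * TD y (TC x w) s"
    using e0 by (simp add: algebra_simps)
  show ?thesis unfolding Dt_def
    by (rule AB_scalar[OF e n(1) n(3) n(6)])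
qed

lemma relBB:
  assumes len: "length mu \<le> length s"
  shows "TB x (TB y w) s = TB y (TB x w) s"
proof -
  let ?f = "\<lambda>x. TB x (TB y w) s - TB y (TB x w) s"
  have c: "continuous_on UNIV ?f"
    by (intro continuous_intros cont_Top)
  have "?f x = 0"
  proof (rule approx_zero[OF c, where ps = "[(1, g - y), (1, y)]"])
    show "\<forall>(k, c)\<in>set [(1::real, g - y), (1, y)]. k \<noteq> 0" by simp
  next
    fix z assume H: "\<forall>(k, c)\<in>set [(1::real, g - y), (1, y)]. sinh (complex_of_real k * z + c) \<noteq> 0"
    then have n: "fa g (z-y) \<noteq> 0" "fb (z+y) \<noteq> 0" by (simp_all add: fa_def fb_def algebra_simps)
    have "fa g (z-y) * fb (z+y) * TB z (TB y w) s = fb (z+y) * fa g (z-y) * TB y (TB z w) s"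
      by (rule E0011[OF len])
    then show "?f z = 0" using n by simp
  qed
  then show ?thesis by simp
qed

lemma relCC:
  assumes len: "length mu \<le> length s"
  shows "TC x (TC y w) s = TC y (TC x w) s"
proof -
  let ?f = "\<lambda>x. TC x (TC y w) s - TC y (TC x w) s"
  have c: "continuous_on UNIV ?f"
    by (intro continuous_intros cont_Top)
  have "?f x = 0"
  proof (rule approx_zero[OF c, where ps = "[(1, g - y), (1, y)]"])
    show "\<forall>(k, c)\<in>set [(1::real, g - y), (1, y)]. k \<noteq> 0" by simp
  next
    fix z assume H: "\<forall>(k, c)\<in>set [(1::real, g - y), (1, y)]. sinh (complex_of_real k * z + c) \<noteq> 0"
    then have n: "fa g (z-y) \<noteq> 0" "fb (z+y) \<noteq> 0" by (simp_all add: fa_def fb_def algebra_simps)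
    have "fa g (z-y) * fb (z+y) * TC z (TC y w) s = fb (z+y) * fa g (z-y) * TC y (TC z w) s"
      by (rule E1100[OF len])
    then show "?f z = 0" using n by simp
  qed
  then show ?thesis by simp
qed

end

context
  fixes g h :: complex and mu :: "complex list"
begin

lemma relDB_gen:
  assumes gen: "gen g x y" and bp: "fb (x+y) \<noteq> 0" and len: "length mu \<le> length s"
  shows "TDt g h mu x (TB g h mu y w) s = alp g x y * TB g h mu y (TDt g h mu x w) s
      + bep g x y * TB g h mu x (TDt g h mu y w) s + gap g x y * TB g h mu x (TA g h mu y w) s"
proof -
  note n = gen_nz[OF gen]
  have E: "sinh g * sinh g * TA g h mu x (TB g h mu y w) s + sinh g * fa g (x+y) * TB g h mu x (TD g h mu y w) s
    + fb (x-y) * fb (x+y) * TD g h mu x (TB g h mu y w) s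
    = sinh g * fa g (x-y) * TA g h mu y (TB g h mu x w) s + fa g (x+y) * fa g (x-y) * TB g h mu y (TD g h mu x w) s"
    using E1011[where g=g and h=h and mu=mu and l=x and m=y and w=w, OF len] .
  have AB1: "TA g h mu x (TB g h mu y w) s = (fa g (y-x)*fb (x+y)/((-fb (x-y))*fa g (x+y))) * TB g h mu y (TA g h mu x w) s
     + (sinh g*fb (2*y)/(fb (x-y)*fa g (2*y))) * TB g h mu x (TA g h mu y w) s
     + (- sinh g/fa g (x+y)) * (TB g h mu x (TD g h mu y w) s - sinh g / fa g (2*y) * TB g h mu x (TA g h mu y w) s)"
    using relAB[where w=w, OF gen len] unfolding al_def be_def ga_def Top_Dt fbs[of y x] .
  have AB2: "TA g h mu y (TB g h mu x w) s = (fa g (x-y)*fb (x+y)/(fb (x-y)*fa g (x+y))) * TB g h mu x (TA g h mu y w) s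
     + (sinh g*fb (2*x)/((-fb (x-y))*fa g (2*x))) * TB g h mu y (TA g h mu x w) s
     + (- sinh g/fa g (x+y)) * (TB g h mu y (TD g h mu x w) s - sinh g / fa g (2*x) * TB g h mu y (TA g h mu x w) s)"
    using relAB[where w=w, OF gen_sym[OF gen] len]
    unfolding al_def be_def ga_def Top_Dt fbs[of y x] fa_c[where y=y and x=x] fb_c[where y=y and x=x] .
  have r: "TD g h mu x (TB g h mu y w) s - sinh g/fa g (2*x) * TA g h mu x (TB g h mu y w) s
    = (fa g (x-y)*fa g (x+y+g)/(fb (x-y)*fa g (x+y)))*(TB g h mu y (TD g h mu x w) s - sinh g/fa g (2*x)*TB g h mu y (TA g h mu x w) s)
     + (-sinh g*fa g (2*x+g)/(fa g (2*x)*fb (x-y)))*(TB g h mu x (TD g h mu y w) s - sinh g/fa g (2*y)*TB g h mu x (TA g h mu y w) s)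
     + (sinh g*fb (2*y)*fa g (2*x+g)/(fa g (2*x)*fa g (2*y)*fa g (x+y)))*TB g h mu x (TA g h mu y w) s"
    by (rule DB_abs[OF n(1) bp n(3) n(5) n(6) tK tJ1 tJ2 tJ3 tJ4 E AB1 AB2])
  have e: "fb (x+y+g) = fa g (x+y)" by (simp add: fa_def fb_def)
  show ?thesis
    unfolding Top_Dt alp_def bep_def gap_def e fb_g2
    using r unfolding Dt_def by simp
qed

lemma relDB:
  assumes gen: "gen g x y" and len: "length mu \<le> length s"
  shows "TDt g h mu x (TB g h mu y w) s = alp g x y * TB g h mu y (TDt g h mu x w) s
      + bep g x y * TB g h mu x (TDt g h mu y w) s + gap g x y * TB g h mu x (TA g h mu y w) s"
proof -
  define R where "R x' = TDt g h mu x' (TB g h mu y w) s - (alp g x' y * TB g h mu y (TDt g h mu x' w) s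
      + bep g x' y * TB g h mu x' (TDt g h mu y w) s + gap g x' y * TB g h mu x' (TA g h mu y w) s)" for x'
  define k1 where "k1 = sinh g/fa g (2*y)"
  define k2 where "k2 = sinh g*fb (2*y)/fa g (2*y)"
  define clr where "clr x' = fb (x'-y)*fa g (x'+y)*(fa g (2*x')*TD g h mu x' (TB g h mu y w) s - sinh g*TA g h mu x' (TB g h mu y w) s)
   - fa g (x'-y)*fa g (x'+y+g)*(fa g (2*x')*TB g h mu y (TD g h mu x' w) s - sinh g*TB g h mu y (TA g h mu x' w) s)
   + sinh g*fa g (2*x'+g)*fa g (x'+y)*(TB g h mu x' (TD g h mu y w) s - k1*TB g h mu x' (TA g h mu y w) s)
   - k2*fa g (2*x'+g)*fb (x'-y) * TB g h mu x' (TA g h mu y w) s" for x'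
  have key: "clr x' = fa g (2*x')*fb (x'-y)*fa g (x'+y) * R x'" if gx: "gen g x' y" for x'
  proof -
    note n = gen_nz[OF gx]
    have e: "fb (x'+y+g) = fa g (x'+y)" by (simp add: fa_def fb_def)
    show ?thesis
      unfolding R_def clr_def Top_Dt alp_def bep_def gap_def e fb_g2 k1_def k2_def
      unfolding Dt_def using n by (simp add: field_simps)
  qed
  have a2y: "fa g (2*y) \<noteq> 0" using gen unfolding gen_def by simp
  have cc: "continuous_on UNIV clr"
    unfolding clr_def fa_def fb_def by (intro continuous_intros cont_Top)
  have zero: "clr x = 0"
  proof (rule approx_zero[OF cc, where ps = "[(1, -y), (1, y+g), (2, g), (1, y)]"])
    show "\<forall>(k, c)\<in>set [(1::real, -y), (1, y+g), (2, g), (1, y)]. k \<noteq> 0" by simp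
  next
    fix z assume H: "\<forall>(k, c)\<in>set [(1::real, -y), (1, y+g), (2, g), (1, y)]. sinh (complex_of_real k * z + c) \<noteq> 0"
    then have n: "fb (z-y) \<noteq> 0" "fa g (z+y) \<noteq> 0" "fa g (2*z) \<noteq> 0" "fb (z+y) \<noteq> 0"
      by (simp_all add: fa_def fb_def algebra_simps)
    have gz: "gen g z y" unfolding gen_def using n a2y by simp
    have "R z = 0" unfolding R_def using relDB_gen[OF gz n(4) len, of w] by simp
    then show "clr z = 0" using key[OF gz] by simp
  qed
  note n = gen_nz[OF gen]
  have "fa g (2*x)*fb (x-y)*fa g (x+y) * R x = 0" using zero key[OF gen] by simp
  then have "R x = 0" using n by simp
  then show ?thesis unfolding R_def by simp
qed

lemma relCD_gen:
  assumes gen: "gen g x y" and bp: "fb (x+y) \<noteq> 0" and len: "length mu \<le> length s"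
  shows "TC g h mu y (TDt g h mu x w) s = alp g x y * TDt g h mu x (TC g h mu y w) s
      + bep g x y * TDt g h mu y (TC g h mu x w) s + gap g x y * TA g h mu y (TC g h mu x w) s"
proof -
  note n = gen_nz[OF gen]
  have E0: "fa g (x-y) * sinh g * TC g h mu x (TA g h mu y w) s + fa g (x-y) * fa g (x+y) * TD g h mu x (TC g h mu y w) s
    = sinh g * sinh g * TC g h mu y (TA g h mu x w) s + fb (x+y) * fb (x-y) * TC g h mu y (TD g h mu x w) s
      + fa g (x+y) * sinh g * TD g h mu y (TC g h mu x w) s"
    using E1110[where g=g and h=h and mu=mu and l=x and m=y and w=w, OF len] .
  have E: "sinh g * sinh g * TC g h mu y (TA g h mu x w) s + sinh g * fa g (x+y) * TD g h mu y (TC g h mu x w) s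
    + fb (x-y) * fb (x+y) * TC g h mu y (TD g h mu x w) s
    = sinh g * fa g (x-y) * TC g h mu x (TA g h mu y w) s + fa g (x+y) * fa g (x-y) * TD g h mu x (TC g h mu y w) s"
    using E0 by (simp add: algebra_simps)
  have AB1: "TC g h mu y (TA g h mu x w) s = (fa g (y-x)*fb (x+y)/((-fb (x-y))*fa g (x+y))) * TA g h mu x (TC g h mu y w) s
     + (sinh g*fb (2*y)/(fb (x-y)*fa g (2*y))) * TA g h mu y (TC g h mu x w) s
     + (- sinh g/fa g (x+y)) * (TD g h mu y (TC g h mu x w) s - sinh g / fa g (2*y) * TA g h mu y (TC g h mu x w) s)"
    using relCA[where w=w, OF gen len] unfolding al_def be_def ga_def Dt_def fbs[of y x] .
  have AB2: "TC g h mu x (TA g h mu y w) s = (fa g (x-y)*fb (x+y)/(fb (x-y)*fa g (x+y))) * TA g h mu y (TC g h mu x w) s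
     + (sinh g*fb (2*x)/((-fb (x-y))*fa g (2*x))) * TA g h mu x (TC g h mu y w) s
     + (- sinh g/fa g (x+y)) * (TD g h mu x (TC g h mu y w) s - sinh g / fa g (2*x) * TA g h mu x (TC g h mu y w) s)"
    using relCA[where w=w, OF gen_sym[OF gen] len]
    unfolding al_def be_def ga_def Dt_def fbs[of y x] fa_c[where y=y and x=x] fb_c[where y=y and x=x] .
  have r: "TC g h mu y (TD g h mu x w) s - sinh g/fa g (2*x) * TC g h mu y (TA g h mu x w) s
    = (fa g (x-y)*fa g (x+y+g)/(fb (x-y)*fa g (x+y)))*(TD g h mu x (TC g h mu y w) s - sinh g/fa g (2*x)*TA g h mu x (TC g h mu y w) s)
     + (-sinh g*fa g (2*x+g)/(fa g (2*x)*fb (x-y)))*(TD g h mu y (TC g h mu x w) s - sinh g/fa g (2*y)*TA g h mu y (TC g h mu x w) s)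
     + (sinh g*fb (2*y)*fa g (2*x+g)/(fa g (2*x)*fa g (2*y)*fa g (x+y)))*TA g h mu y (TC g h mu x w) s"
    by (rule DB_abs[OF n(1) bp n(3) n(5) n(6) tK tJ1 tJ2 tJ3 tJ4 E AB1 AB2])
  have e: "fb (x+y+g) = fa g (x+y)" by (simp add: fa_def fb_def)
  show ?thesis
    unfolding Top_Dt alp_def bep_def gap_def e fb_g2
    using r unfolding Dt_def by simp
qed

lemma relCD:
  assumes gen: "gen g x y" and len: "length mu \<le> length s"
  shows "TC g h mu y (TDt g h mu x w) s = alp g x y * TDt g h mu x (TC g h mu y w) s
      + bep g x y * TDt g h mu y (TC g h mu x w) s + gap g x y * TA g h mu y (TC g h mu x w) s"
proof -
  define R where "R x' = TC g h mu y (TDt g h mu x' w) s - (alp g x' y * TDt g h mu x' (TC g h mu y w) s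
      + bep g x' y * TDt g h mu y (TC g h mu x' w) s + gap g x' y * TA g h mu y (TC g h mu x' w) s)" for x'
  define k1 where "k1 = sinh g/fa g (2*y)"
  define k2 where "k2 = sinh g*fb (2*y)/fa g (2*y)"
  define clr where "clr x' = fb (x'-y)*fa g (x'+y)*(fa g (2*x')*TC g h mu y (TD g h mu x' w) s - sinh g*TC g h mu y (TA g h mu x' w) s)
   - fa g (x'-y)*fa g (x'+y+g)*(fa g (2*x')*TD g h mu x' (TC g h mu y w) s - sinh g*TA g h mu x' (TC g h mu y w) s)
   + sinh g*fa g (2*x'+g)*fa g (x'+y)*(TD g h mu y (TC g h mu x' w) s - k1*TA g h mu y (TC g h mu x' w) s)
   - k2*fa g (2*x'+g)*fb (x'-y) * TA g h mu y (TC g h mu x' w) s" for x'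
  have key: "clr x' = fa g (2*x')*fb (x'-y)*fa g (x'+y) * R x'" if gx: "gen g x' y" for x'
  proof -
    note n = gen_nz[OF gx]
    have e: "fb (x'+y+g) = fa g (x'+y)" by (simp add: fa_def fb_def)
    show ?thesis
      unfolding R_def clr_def Top_Dt alp_def bep_def gap_def e fb_g2 k1_def k2_def
      unfolding Dt_def using n by (simp add: field_simps)
  qed
  have a2y: "fa g (2*y) \<noteq> 0" using gen unfolding gen_def by simp
  have cc: "continuous_on UNIV clr"
    unfolding clr_def fa_def fb_def by (intro continuous_intros cont_Top)
  have zero: "clr x = 0"
  proof (rule approx_zero[OF cc, where ps = "[(1, -y), (1, y+g), (2, g), (1, y)]"])
    show "\<forall>(k, c)\<in>set [(1::real, -y), (1, y+g), (2, g), (1, y)]. k \<noteq> 0" by simp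
  next
    fix z assume H: "\<forall>(k, c)\<in>set [(1::real, -y), (1, y+g), (2, g), (1, y)]. sinh (complex_of_real k * z + c) \<noteq> 0"
    then have n: "fb (z-y) \<noteq> 0" "fa g (z+y) \<noteq> 0" "fa g (2*z) \<noteq> 0" "fb (z+y) \<noteq> 0"
      by (simp_all add: fa_def fb_def algebra_simps)
    have gz: "gen g z y" unfolding gen_def using n a2y by simp
    have "R z = 0" unfolding R_def using relCD_gen[OF gz n(4) len, of w] by simp
    then show "clr z = 0" using key[OF gz] by simp
  qed
  note n = gen_nz[OF gen]
  have "fa g (2*x)*fb (x-y)*fa g (x+y) * R x = 0" using zero key[OF gen] by simp
  then have "R x = 0" using n by simp
  then show ?thesis unfolding R_def by simp
qed

end

definition qagree :: "nat \<Rightarrow> nat \<Rightarrow> avec \<Rightarrow> avec \<Rightarrow> bool" where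
  "qagree n q v w \<longleftrightarrow> (\<forall>a s. length s = n \<longrightarrow> a + sum_list s = q \<longrightarrow> v a s = w a s)"

definition qpres :: "nat \<Rightarrow> (avec \<Rightarrow> avec) \<Rightarrow> bool" where
  "qpres n F \<longleftrightarrow> (\<forall>q v w. qagree n q v w \<longrightarrow> qagree n q (F v) (F w))"

lemma Rmat_charge: "Rmat g x i j k l \<noteq> 0 \<Longrightarrow> i + j = k + l"
  unfolding Rmat_def by (auto split: if_splits)

lemma qpres_Rop: assumes "p < n" shows "qpres n (Rop g x p)"
  unfolding qpres_def qagree_def
proof (intro allI impI)
  fix q :: nat and v w :: avec and a :: nat and s :: "nat list"
  assume H: "\<forall>a s. length s = n \<longrightarrow> a + sum_list s = q \<longrightarrow> v a s = w a s"
    and l: "length s = n" and qs: "a + sum_list s = q"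
  have "Rmat g x a (s!p) t0 t * v t0 (s[p:=t]) = Rmat g x a (s!p) t0 t * w t0 (s[p:=t])" for t0 t
  proof (cases "Rmat g x a (s!p) t0 t = 0")
    case False
    then have ch: "a + s!p = t0 + t" by (rule Rmat_charge)
    have pl: "p < length s" using assms l by simp
    have "sum_list (s[p:=t]) = sum_list s + t - s!p" by (rule sum_list_update[OF pl])
    moreover have "s!p \<le> sum_list s" by (rule elem_le_sum_list[OF pl])
    ultimately have "t0 + sum_list (s[p:=t]) = q" using ch qs by linarith
    then show ?thesis using H l by simp
  qed simp
  then show "Rop g x p v a s = Rop g x p w a s" unfolding Rop_def by (simp only:)
qed

lemma qpres_Kop: "qpres n (Kop h x)"
  unfolding qpres_def qagree_def Kop_def by simp

lemma qpres_comp: assumes F: "qpres n F" and G: "qpres n G" shows "qpres n (\<lambda>v. F (G v))"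
  unfolding qpres_def
proof (intro allI impI)
  fix q v w assume "qagree n q v w"
  then have "qagree n q (G v) (G w)" using G unfolding qpres_def by blast
  then show "qagree n q (F (G v)) (F (G w))" using F unfolding qpres_def by blast
qed

lemma qpres_fold: "(\<And>p. p \<in> set ps \<Longrightarrow> qpres n (f p)) \<Longrightarrow> qpres n (fold f ps)"
proof (induction ps)
  case Nil then show ?case by (simp add: qpres_def)
next
  case (Cons p ps)
  then have "qpres n (\<lambda>v. fold f ps (f p v))"
    by (intro qpres_comp[of n "fold f ps" "f p"]) auto
  then show ?case by (simp add: comp_def)
qed

lemma qpres_DRop: assumes "length mu \<le> n" shows "qpres n (DRop g h mu x)"
proof -
  let ?F1 = "fold (\<lambda>p w. Rop g (x - mu ! p) p w) [0..<length mu]"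
  let ?F2 = "fold (\<lambda>p w. Rop g (x + mu ! p) p w) (rev [0..<length mu])"
  have "qpres n ?F1" by (rule qpres_fold) (use assms in \<open>auto intro: qpres_Rop\<close>)
  moreover have "qpres n ?F2" by (rule qpres_fold) (use assms in \<open>auto intro: qpres_Rop\<close>)
  ultimately show ?thesis unfolding DRop_eq
    by (intro qpres_comp[of n ?F1 "\<lambda>v. Kop h x (?F2 v)"] qpres_comp[of n "Kop h x" ?F2] qpres_Kop)
qed

lemma DRop_qagree:
  assumes "length mu \<le> length s" "qagree (length s) (a + sum_list s) v w"
  shows "DRop g h mu x v a s = DRop g h mu x w a s"
  using qpres_DRop[OF assms(1), of g h x] assms(2) unfolding qpres_def qagree_def by blast

lemma sum_list_zero_iff: "(sum_list (s::nat list) = 0) = (s = replicate (length s) 0)"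
  by (induction s) auto

lemma Top_vac_diag_zero:
  assumes len: "length s = length mu" and nz: "s \<noteq> replicate (length mu) 0"
  shows "Top g h mu i i x (vac (length mu)) s = 0"
proof -
  have pos: "sum_list s \<noteq> 0" using nz len sum_list_zero_iff[of s] by simp
  have "DRop g h mu x (\<lambda>t0 t. if t0 = i then vac (length mu) t else 0) i s = DRop g h mu x (\<lambda>a s. 0) i s"
  proof (rule DRop_qagree)
    show "length mu \<le> length s" using len by simp
    show "qagree (length s) (i + sum_list s) (\<lambda>t0 t. if t0 = i then vac (length mu) t else 0) (\<lambda>a s. 0)"
      unfolding qagree_def vac_def using pos len by (auto simp: sum_list_replicate)
  qed
  then show ?thesis unfolding Top_def by (simp add: lin_zero[OF lin_DRop])
qed

lemma Top_vac_off_zero: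
  assumes len: "length mu \<le> length s" and ij: "i \<noteq> j" "i \<le> 1" "j \<le> 1" and s0: "sum_list s = 0"
  shows "Top g h mu i j x (vac (length mu)) s = 0"
proof -
  have "DRop g h mu x (\<lambda>t0 t. if t0 = j then vac (length mu) t else 0) i s = DRop g h mu x (\<lambda>a s. 0) i s"
  proof (rule DRop_qagree[OF len])
    show "qagree (length s) (i + sum_list s) (\<lambda>t0 t. if t0 = j then vac (length mu) t else 0) (\<lambda>a s. 0)"
      unfolding qagree_def vac_def using ij s0 by (auto simp: sum_list_replicate simp del: sum_list_eq_0_iff)
  qed
  then show ?thesis unfolding Top_def by (simp add: lin_zero[OF lin_DRop])
qed

lemma Top_left_vac:
  assumes "i \<le> 1"
  shows "Top g h mu i i x w (replicate (length mu) 0)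
       = w (replicate (length mu) 0) * Top g h mu i i x (vac (length mu)) (replicate (length mu) 0)"
proof -
  let ?z = "replicate (length mu) 0"
  have "DRop g h mu x (\<lambda>t0 t. if t0 = i then w t else 0) i ?z
      = DRop g h mu x (\<lambda>t0 t. if t0 = i then w ?z * vac (length mu) t else 0) i ?z"
  proof (rule DRop_qagree)
    show "length mu \<le> length ?z" by simp
    show "qagree (length ?z) (i + sum_list ?z) (\<lambda>t0 t. if t0 = i then w t else 0)
       (\<lambda>t0 t. if t0 = i then w ?z * vac (length mu) t else 0)"
      unfolding qagree_def vac_def by (auto simp: sum_list_replicate simp del: sum_list_eq_0_iff dest: sum_list_zero_iff[THEN iffD1])
  qed
  then have "Top g h mu i i x w ?z = Top g h mu i i x (\<lambda>t. w ?z * vac (length mu) t) ?z"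
    unfolding Top_def by simp
  then show ?thesis by (simp add: Top_scale)
qed

definition slc :: "nat \<Rightarrow> (avec \<Rightarrow> avec) \<Rightarrow> bool" where
  "slc n F \<longleftrightarrow> (\<forall>v a s t. length s = n \<longrightarrow> F v a (s@[t]) = F (\<lambda>a' s'. v a' (s'@[t])) a s)"

lemma slc_Rop: assumes "p < n" shows "slc n (Rop g x p)"
  unfolding slc_def
proof (intro allI impI)
  fix v :: avec and a :: nat and s :: "nat list" and t :: nat
  assume l: "length s = n"
  then have pl: "p < length s" using assms by simp
  show "Rop g x p v a (s @ [t]) = Rop g x p (\<lambda>a' s'. v a' (s' @ [t])) a s"
    unfolding Rop_def using pl by (simp add: nth_append list_update_append)
qed

lemma slc_Kop: "slc n (Kop h x)"
  unfolding slc_def Kop_def by simp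

lemma slc_comp: assumes F: "slc n F" "aloc F" and G: "slc n G" shows "slc n (\<lambda>v. F (G v))"
  unfolding slc_def
proof (intro allI impI)
  fix v :: avec and a :: nat and s :: "nat list" and t :: nat
  assume l: "length s = n"
  have "F (G v) a (s @ [t]) = F (\<lambda>a' s'. G v a' (s' @ [t])) a s"
    using F(1) l unfolding slc_def by blast
  also have "\<dots> = F (G (\<lambda>a' s'. v a' (s' @ [t]))) a s"
  proof (rule alocD[OF F(2) _ l])
    fix a' :: nat and s' :: "nat list" assume "length s' = n"
    then show "G v a' (s' @ [t]) = G (\<lambda>a' s'. v a' (s' @ [t])) a' s'"
      using G unfolding slc_def by blast
  qed
  finally show "F (G v) a (s @ [t]) = F (G (\<lambda>a' s'. v a' (s' @ [t]))) a s" .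
qed

lemma aloc_fold_gen: "(\<And>p. p \<in> set ps \<Longrightarrow> aloc (f p)) \<Longrightarrow> aloc (fold f ps)"
  by (rule aloc_fold)

lemma slc_fold: "(\<And>p. p \<in> set ps \<Longrightarrow> slc n (f p) \<and> aloc (f p)) \<Longrightarrow> slc n (fold f ps) \<and> aloc (fold f ps)"
proof (induction ps)
  case Nil then show ?case by (simp add: slc_def aloc_def)
next
  case (Cons p ps)
  then have IH: "slc n (fold f ps)" "aloc (fold f ps)" and P: "slc n (f p)" "aloc (f p)" by auto
  have "slc n (\<lambda>v. fold f ps (f p v))" by (rule slc_comp[OF IH P(1)])
  moreover have "aloc (\<lambda>v. fold f ps (f p v))" by (rule aloc_comp[OF IH(2) P(2)])
  ultimately show ?case by (simp add: comp_def)
qed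

lemma slc_DRop: assumes "length mu \<le> n" shows "slc n (DRop g h mu x)"
proof -
  let ?F1 = "fold (\<lambda>p w. Rop g (x - mu ! p) p w) [0..<length mu]"
  let ?F2 = "fold (\<lambda>p w. Rop g (x + mu ! p) p w) (rev [0..<length mu])"
  have 1: "slc n ?F1 \<and> aloc ?F1" by (rule slc_fold) (use assms in \<open>auto intro: slc_Rop aloc_Rop\<close>)
  have 2: "slc n ?F2 \<and> aloc ?F2" by (rule slc_fold) (use assms in \<open>auto intro: slc_Rop aloc_Rop\<close>)
  have 3: "slc n (\<lambda>v. Kop h x (?F2 v))" by (rule slc_comp[OF slc_Kop aloc_Kop]) (use 2 in simp)
  show ?thesis unfolding DRop_eq
    by (rule slc_comp[OF conjunct1[OF 1] conjunct2[OF 1] 3])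
qed

lemma DRop_slice:
  assumes "length mu \<le> length s"
  shows "DRop g h mu x v a (s@[t]) = DRop g h mu x (\<lambda>a' s'. v a' (s'@[t])) a s"
  using slc_DRop[OF assms, of g h x] unfolding slc_def by blast

definition vA :: "complex \<Rightarrow> complex \<Rightarrow> complex list \<Rightarrow> complex \<Rightarrow> complex" where
  "vA g h mu x = Top g h mu 0 0 x (vac (length mu)) (replicate (length mu) 0)"
definition vD :: "complex \<Rightarrow> complex \<Rightarrow> complex list \<Rightarrow> complex \<Rightarrow> complex" where
  "vD g h mu x = Top g h mu 1 1 x (vac (length mu)) (replicate (length mu) 0)"

lemma Top_snoc_vac:
  assumes ij: "i \<le> 1" "j \<le> 1"
  shows "Top g h (mu@[m]) i j x (vac (Suc (length mu))) (replicate (Suc (length mu)) 0)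
    = (\<Sum>t0\<in>{0,1}. \<Sum>t\<in>{0,1}. Rmat g (x-m) i 0 t0 t *
         (\<Sum>e\<in>{0,1}. Rmat g (x+m) e t j 0 * Top g h mu t0 e x (vac (length mu)) (replicate (length mu) 0)))"
proof -
  let ?L = "length mu" let ?z = "replicate ?L (0::nat)"
  define Vj :: avec where "Vj = (\<lambda>t0 t. if t0 = j then vac (Suc ?L) t else 0)"
  define W where "W = DRop g h mu x (Rop g (x+m) ?L Vj)"
  have rz: "replicate (Suc ?L) (0::nat) = ?z @ [0]" by (simp add: replicate_append_same)
  have lhs: "Top g h (mu@[m]) i j x (vac (Suc ?L)) (replicate (Suc ?L) 0)
      = (\<Sum>t0\<in>{0,1}. \<Sum>t\<in>{0,1}. Rmat g (x-m) i 0 t0 t * W t0 (?z @ [t]))"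
    unfolding Top_def DRop_snoc W_def Vj_def[symmetric] rz Rop_def
    by (simp add: nth_append list_update_append)
  have inner: "W t0 (?z @ [t]) = (\<Sum>e\<in>{0,1}. Rmat g (x+m) e t j 0 * Top g h mu t0 e x (vac ?L) ?z)"
    if t0: "t0 \<le> 1" and tt: "t \<le> 1" for t0 t
  proof -
    have "W t0 (?z @ [t]) = DRop g h mu x (\<lambda>a s'. Rop g (x+m) ?L Vj a (s'@[t])) t0 ?z"
      unfolding W_def by (rule DRop_slice) simp
    also have "\<dots> = DRop g h mu x (\<lambda>a s'. Rmat g (x+m) a t j 0 * vac ?L s') t0 ?z"
    proof (rule alocD[OF aloc_DRop _ refl])
      fix a :: nat and s' :: "nat list" assume l0: "length s' = length ?z"
      then have l: "length s' = ?L" by simp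
      have v: "vac (Suc ?L) (s' @ [u]) = (if u = 0 then vac ?L s' else 0)" for u
      proof -
        have "vac (Suc ?L) (s' @ [u]) = (if s' @ [u] = ?z @ [0] then 1 else 0)"
          unfolding vac_def rz by (simp only: length_replicate)
        also have "\<dots> = (if u = 0 then vac ?L s' else 0)"
          unfolding vac_def append1_eq_conv by auto
        finally show ?thesis .
      qed
      show "Rop g (x+m) ?L Vj a (s'@[t]) = Rmat g (x+m) a t j 0 * vac ?L s'"
      proof -
        have "j = 0 \<or> j = 1" using ij(2) by auto
        then show ?thesis by (elim disjE) (simp_all add: Rop_def Vj_def l nth_append list_update_append v)
      qed
    qed
    also have "\<dots> = (\<Sum>e\<in>{0,1}. Top g h mu t0 e x (\<lambda>s'. Rmat g (x+m) e t j 0 * vac ?L s') ?z)"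
      by (rule DRop_decomp[OF t0])
    finally show ?thesis by (simp add: Top_scale)
  qed
  show ?thesis unfolding lhs by (simp add: inner)
qed

lemma vA_snoc: "vA g h (mu@[m]) x = fa g (x-m) * fa g (x+m) * vA g h mu x"
  unfolding vA_def using Top_snoc_vac[of 0 0 g h mu m x]
  by (simp add: Rmat_def Top_vac_off_zero[of mu "replicate (length mu) 0"])

lemma vD_snoc: "vD g h (mu@[m]) x = fb (x-m) * fb (x+m) * vD g h mu x + sinh g * sinh g * vA g h mu x"
  unfolding vA_def vD_def using Top_snoc_vac[of 1 1 g h mu m x]
  by (simp add: Rmat_def Top_vac_off_zero[of mu "replicate (length mu) 0"])

lemma vA_Nil: "vA g h [] x = fb (h+x)"
  unfolding vA_def Top_def by (simp add: DRop_Nil Kop_def vac_def fb_def)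
lemma vD_Nil: "vD g h [] x = sinh (h - x)"
  unfolding vD_def Top_def by (simp add: DRop_Nil Kop_def vac_def)

lemma prod_snoc_nth: "(\<Prod>j<length (mu@[m]). f ((mu@[m])!j)) = (\<Prod>j<length mu. f (mu!j)) * f m"
proof -
  have "(\<Prod>j<length mu. f ((mu@[m])!j)) = (\<Prod>j<length mu. f (mu!j))"
    by (rule prod.cong) (auto simp: nth_append)
  then show ?thesis by (simp add: prod.lessThan_Suc)
qed

lemma vA_Lambda: "vA g h mu x = LambdaA g h mu x"
proof (induction mu rule: rev_induct)
  case Nil then show ?case by (simp add: vA_Nil LambdaA_def)
next
  case (snoc m mu)
  have "(\<Prod>j<length (mu@[m]). fa g (x - (mu@[m]) ! j) * fa g (x + (mu@[m]) ! j))
      = (\<Prod>j<length mu. fa g (x - mu ! j) * fa g (x + mu ! j)) * (fa g (x - m) * fa g (x + m))"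
    by (rule prod_snoc_nth[where f = "\<lambda>u. fa g (x - u) * fa g (x + u)"])
  note pr = this
  show ?case unfolding vA_snoc snoc LambdaA_def pr by (simp add: algebra_simps)
qed

definition PD :: "complex list \<Rightarrow> complex \<Rightarrow> complex" where
  "PD mu x = (\<Prod>j<length mu. fb (x - mu ! j) * fb (x + mu ! j))"

lemma tD0: "fa g (2*x) * sinh (h - x) = - fb (2*x) * fa g (x-h) + sinh g * fb (h+x)"
  unfolding fa_def fb_def apply (simp only: trig_simps) by (simp add: field_simps)

lemma vD_Lambda: "fa g (2*x) * vD g h mu x = - fb (2*x) * fa g (x-h) * PD mu x + sinh g * LambdaA g h mu x"
proof (induction mu rule: rev_induct)
  case Nil then show ?case by (simp add: vD_Nil LambdaA_def PD_def tD0)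
next
  case (snoc m mu)
  have pd: "PD (mu@[m]) x = PD mu x * (fb (x - m) * fb (x + m))"
    unfolding PD_def by (rule prod_snoc_nth[where f = "\<lambda>u. fb (x - u) * fb (x + u)"])
  have la: "LambdaA g h (mu@[m]) x = LambdaA g h mu x * (fa g (x - m) * fa g (x + m))"
    unfolding LambdaA_def prod_snoc_nth[where f = "\<lambda>u. fa g (x - u) * fa g (x + u)"] by (simp add: algebra_simps)
  have k: "sinh g * fa g (2*x) + fb (x-m) * fb (x+m) = fa g (x+m) * fa g (x-m)" by (rule tK)
  have "fa g (2*x) * vD g h (mu@[m]) x
     = fb (x-m) * fb (x+m) * (fa g (2*x) * vD g h mu x) + sinh g * sinh g * fa g (2*x) * LambdaA g h mu x"
    by (simp add: vD_snoc vA_Lambda algebra_simps)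
  also have "\<dots> = - fb (2*x) * fa g (x-h) * PD (mu@[m]) x
      + sinh g * LambdaA g h mu x * (sinh g * fa g (2*x) + fb (x-m) * fb (x+m))"
    unfolding snoc pd by (simp add: algebra_simps)
  also have "\<dots> = - fb (2*x) * fa g (x-h) * PD (mu@[m]) x + sinh g * LambdaA g h (mu@[m]) x"
    unfolding k la by (simp add: algebra_simps)
  finally show ?case .
qed

lemma vDt_Lambda: "fa g (2*x) \<noteq> 0 \<Longrightarrow> vD g h mu x - sinh g / fa g (2*x) * vA g h mu x = LambdaDt g h mu x"
proof -
  assume n: "fa g (2*x) \<noteq> 0"
  have "vD g h mu x - sinh g / fa g (2*x) * vA g h mu x = (fa g (2*x) * vD g h mu x - sinh g * vA g h mu x) / fa g (2*x)"
    using n by (simp add: field_simps)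
  also have "\<dots> = (- fb (2*x) * fa g (x-h) * PD mu x) / fa g (2*x)"
    using vD_Lambda[of g x h mu] vA_Lambda[of g h mu x] by simp
  also have "\<dots> = LambdaDt g h mu x" unfolding LambdaDt_def PD_def by simp
  finally show ?thesis .
qed

context
  fixes g h :: complex and mu :: "complex list"
begin

lemma right_vacA: "length s = length mu \<Longrightarrow> TA g h mu x (vac (length mu)) s = LambdaA g h mu x * vac (length mu) s"
proof (cases "s = replicate (length mu) 0")
  case True then show ?thesis using vA_Lambda[of g h mu x] unfolding vA_def by (simp add: vac_def)
next
  case False
  assume l: "length s = length mu"
  then show ?thesis using Top_vac_diag_zero[OF l False] False by (simp add: vac_def)
qed

lemma right_vacD: "length s = length mu \<Longrightarrow> TD g h mu x (vac (length mu)) s = vD g h mu x * vac (length mu) s"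
proof (cases "s = replicate (length mu) 0")
  case True then show ?thesis unfolding vD_def by (simp add: vac_def)
next
  case False
  assume l: "length s = length mu"
  then show ?thesis using Top_vac_diag_zero[OF l False] False by (simp add: vac_def)
qed

lemma right_vacDt: "fa g (2*x) \<noteq> 0 \<Longrightarrow> length s = length mu \<Longrightarrow>
   TDt g h mu x (vac (length mu)) s = LambdaDt g h mu x * vac (length mu) s"
  unfolding Dt_def using right_vacA[of s x] right_vacD[of s x] vDt_Lambda[of g x h mu] vA_Lambda[of g h mu x]
  by (simp add: algebra_simps)

lemma left_vacA: "TA g h mu x w (replicate (length mu) 0) = LambdaA g h mu x * w (replicate (length mu) 0)"
  using Top_left_vac[of 0 g h mu x w] vA_Lambda[of g h mu x] unfolding vA_def by simp

lemma left_vacDt: "fa g (2*x) \<noteq> 0 \<Longrightarrow>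
   TDt g h mu x w (replicate (length mu) 0) = LambdaDt g h mu x * w (replicate (length mu) 0)"
  unfolding Dt_def using Top_left_vac[of 0 g h mu x w] Top_left_vac[of 1 g h mu x w]
    vDt_Lambda[of g x h mu] vA_Lambda[of g h mu x] unfolding vA_def vD_def
  by (simp add: algebra_simps)

end

definition uA :: "complex \<Rightarrow> (complex \<Rightarrow> complex) \<Rightarrow> (complex \<Rightarrow> complex) \<Rightarrow> complex \<Rightarrow> complex list \<Rightarrow> nat \<Rightarrow> complex" where
  "uA g LA LD x ys k = be g x (ys!k) * LA (ys!k) * (\<Prod>j\<in>{..<length ys}-{k}. al g (ys!k) (ys!j))
     + ga g x (ys!k) * LD (ys!k) * (\<Prod>j\<in>{..<length ys}-{k}. alp g (ys!k) (ys!j))"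
definition uD :: "complex \<Rightarrow> (complex \<Rightarrow> complex) \<Rightarrow> (complex \<Rightarrow> complex) \<Rightarrow> complex \<Rightarrow> complex list \<Rightarrow> nat \<Rightarrow> complex" where
  "uD g LA LD x ys k = bep g x (ys!k) * LD (ys!k) * (\<Prod>j\<in>{..<length ys}-{k}. alp g (ys!k) (ys!j))
     + gap g x (ys!k) * LA (ys!k) * (\<Prod>j\<in>{..<length ys}-{k}. al g (ys!k) (ys!j))"

lemma prod_del_0: "(\<Prod>j\<in>{..<Suc n}-{0}. f j) = (\<Prod>j<n. f (Suc j))"
proof -
  have "{..<Suc n}-{0} = Suc ` {..<n}" by (auto simp: image_iff less_Suc_eq_0_disj)
  then show ?thesis by (simp add: prod.reindex)
qed

lemma prod_del_Suc: "k < n \<Longrightarrow> (\<Prod>j\<in>{..<Suc n}-{Suc k}. f j) = f 0 * (\<Prod>j\<in>{..<n}-{k}. f (Suc j))"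
proof -
  assume k: "k < n"
  have "{..<Suc n}-{Suc k} = insert 0 (Suc ` ({..<n}-{k}))"
    by (auto simp: image_iff less_Suc_eq_0_disj)
  then show ?thesis by (simp add: prod.reindex)
qed

lemma del_at_0: "del_at 0 (y # ys) = ys" by (simp add: del_at_def)
lemma del_at_Suc: "del_at (Suc k) (y # ys) = y # del_at k ys" by (simp add: del_at_def)

locale offshell =
  fixes g :: complex
    and A D B :: "complex \<Rightarrow> 'v \<Rightarrow> 'v"
    and LA LD :: "complex \<Rightarrow> complex"
    and v0 :: 'v
    and V :: "'v set"
    and T :: "('v \<Rightarrow> complex) set"
  assumes v0V: "v0 \<in> V"
    and BV: "v \<in> V \<Longrightarrow> B y v \<in> V"
    and T_closed: "F \<in> T \<Longrightarrow> (\<lambda>v. F (B y v)) \<in> T"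
    and relA: "F \<in> T \<Longrightarrow> v \<in> V \<Longrightarrow> gen g x y \<Longrightarrow>
       F (A x (B y v)) = al g x y * F (B y (A x v)) + be g x y * F (B x (A y v)) + ga g x y * F (B x (D y v))"
    and relD: "F \<in> T \<Longrightarrow> v \<in> V \<Longrightarrow> gen g x y \<Longrightarrow>
       F (D x (B y v)) = alp g x y * F (B y (D x v)) + bep g x y * F (B x (D y v)) + gap g x y * F (B x (A y v))"
    and relB: "F \<in> T \<Longrightarrow> v \<in> V \<Longrightarrow> F (B x (B y v)) = F (B y (B x v))"
    and vacA: "F \<in> T \<Longrightarrow> F (A x v0) = LA x * F v0"
    and vacD: "F \<in> T \<Longrightarrow> fa g (2*x) \<noteq> 0 \<Longrightarrow> F (D x v0) = LD x * F v0"
begin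

lemma foldr_V: "foldr B ys v0 \<in> V"
  by (induction ys) (auto simp: v0V BV)

theorem off_both:
  assumes F: "F \<in> T" and gx: "\<forall>k<length ys. gen g x (ys!k)"
    and gy: "\<forall>j<length ys. \<forall>k<length ys. j \<noteq> k \<longrightarrow> gen g (ys!j) (ys!k)"
    and a2: "fa g (2*x) \<noteq> 0"
  shows "F (A x (foldr B ys v0)) = LA x * (\<Prod>k<length ys. al g x (ys!k)) * F (foldr B ys v0)
            + (\<Sum>k<length ys. uA g LA LD x ys k * F (B x (foldr B (del_at k ys) v0)))
       \<and> F (D x (foldr B ys v0)) = LD x * (\<Prod>k<length ys. alp g x (ys!k)) * F (foldr B ys v0)
            + (\<Sum>k<length ys. uD g LA LD x ys k * F (B x (foldr B (del_at k ys) v0)))"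
  using F gx gy a2
proof (induction ys arbitrary: x F)
  case Nil
  then show ?case by (simp add: vacA vacD)
next
  case (Cons y1 ys)
  let ?n = "length ys"
  let ?P = "foldr B ys v0"
  let ?z = "\<lambda>k. ys ! k"
  define F1 where "F1 = (\<lambda>v. F (B y1 v))"
  define F2 where "F2 = (\<lambda>v. F (B x v))"
  have F1T: "F1 \<in> T" unfolding F1_def by (rule T_closed[OF Cons.prems(1)])
  have F2T: "F2 \<in> T" unfolding F2_def by (rule T_closed[OF Cons.prems(1)])
  have gxy1: "gen g x y1" using Cons.prems(2) by auto
  have gxz: "\<forall>k<?n. gen g x (?z k)" using Cons.prems(2) by auto
  have gy1z: "\<forall>k<?n. gen g y1 (?z k)" using Cons.prems(3) by fastforce
  have gzz: "\<forall>j<?n. \<forall>k<?n. j \<noteq> k \<longrightarrow> gen g (?z j) (?z k)" using Cons.prems(3) by fastforce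
  have a2y1: "fa g (2*y1) \<noteq> 0" using gxy1 unfolding gen_def by simp
  note IHx = Cons.IH[OF F1T gxz gzz Cons.prems(4)]
  note IHy = Cons.IH[OF F2T gy1z gzz a2y1]
  define W where "W k = F (B x (B y1 (foldr B (del_at k ys) v0)))" for k
  define W0 where "W0 = F (B x ?P)"
  have PV: "?P \<in> V" by (rule foldr_V)
  have w1: "F1 (B x (foldr B (del_at k ys) v0)) = W k" for k
    unfolding F1_def W_def by (rule relB[OF Cons.prems(1) foldr_V])
  have w2: "F2 (B y1 (foldr B (del_at k ys) v0)) = W k" for k
    unfolding F2_def W_def ..
  have f1: "F1 ?P = F (foldr B (y1 # ys) v0)" unfolding F1_def by simp
  have f2: "F2 ?P = W0" unfolding F2_def W0_def ..
  have d0: "F (B x (foldr B (del_at 0 (y1#ys)) v0)) = W0" unfolding W0_def del_at_0 ..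
  have dS: "F (B x (foldr B (del_at (Suc k) (y1#ys)) v0)) = W k" for k unfolding W_def del_at_Suc by simp
  have palx: "(\<Prod>k<length (y1#ys). al g x ((y1#ys)!k)) = al g x y1 * (\<Prod>k<?n. al g x (?z k))"
    by (simp only: length_Cons prod.lessThan_Suc_shift nth_Cons_0 nth_Cons_Suc)
  have palpx: "(\<Prod>k<length (y1#ys). alp g x ((y1#ys)!k)) = alp g x y1 * (\<Prod>k<?n. alp g x (?z k))"
    by (simp only: length_Cons prod.lessThan_Suc_shift nth_Cons_0 nth_Cons_Suc)
  have sumsplit: "(\<Sum>k<length (y1#ys). f k) = f 0 + (\<Sum>k<?n. f (Suc k))" for f :: "nat \<Rightarrow> complex"
    by (simp only: length_Cons sum.lessThan_Suc_shift)
  have uA0: "uA g LA LD x (y1#ys) 0 = be g x y1 * LA y1 * (\<Prod>k<?n. al g y1 (?z k)) + ga g x y1 * LD y1 * (\<Prod>k<?n. alp g y1 (?z k))"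
    unfolding uA_def by (simp add: prod_del_0)
  have uD0: "uD g LA LD x (y1#ys) 0 = bep g x y1 * LD y1 * (\<Prod>k<?n. alp g y1 (?z k)) + gap g x y1 * LA y1 * (\<Prod>k<?n. al g y1 (?z k))"
    unfolding uD_def by (simp add: prod_del_0)
  have uAS: "uA g LA LD x (y1#ys) (Suc k) = al g x y1 * uA g LA LD x ys k + be g x y1 * uA g LA LD y1 ys k + ga g x y1 * uD g LA LD y1 ys k"
    if k: "k < ?n" for k
  proof -
    define PA where "PA = (\<Prod>j\<in>{..<?n}-{k}. al g (?z k) (?z j))"
    define PD where "PD = (\<Prod>j\<in>{..<?n}-{k}. alp g (?z k) (?z j))"
    have i1: "al g x y1 * be g x (?z k) + be g x y1 * be g y1 (?z k) + ga g x y1 * gap g y1 (?z k) = be g x (?z k) * al g (?z k) y1"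
      by (rule I1) (use gxy1 gxz gy1z k in auto)
    have i2: "al g x y1 * ga g x (?z k) + be g x y1 * ga g y1 (?z k) + ga g x y1 * bep g y1 (?z k) = ga g x (?z k) * alp g (?z k) y1"
      by (rule I2) (use gxy1 gxz gy1z k in auto)
    have l: "uA g LA LD x (y1#ys) (Suc k) = be g x (?z k) * LA (?z k) * (al g (?z k) y1 * PA) + ga g x (?z k) * LD (?z k) * (alp g (?z k) y1 * PD)"
      unfolding uA_def PA_def PD_def using k by (simp add: prod_del_Suc)
    have r: "al g x y1 * uA g LA LD x ys k + be g x y1 * uA g LA LD y1 ys k + ga g x y1 * uD g LA LD y1 ys k
       = LA (?z k) * PA * (al g x y1 * be g x (?z k) + be g x y1 * be g y1 (?z k) + ga g x y1 * gap g y1 (?z k))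
        + LD (?z k) * PD * (al g x y1 * ga g x (?z k) + be g x y1 * ga g y1 (?z k) + ga g x y1 * bep g y1 (?z k))"
      unfolding uA_def uD_def PA_def PD_def by (simp add: algebra_simps)
    show ?thesis unfolding l r i1 i2 by (simp add: algebra_simps)
  qed
  have uDS: "uD g LA LD x (y1#ys) (Suc k) = alp g x y1 * uD g LA LD x ys k + bep g x y1 * uD g LA LD y1 ys k + gap g x y1 * uA g LA LD y1 ys k"
    if k: "k < ?n" for k
  proof -
    define PA where "PA = (\<Prod>j\<in>{..<?n}-{k}. al g (?z k) (?z j))"
    define PD where "PD = (\<Prod>j\<in>{..<?n}-{k}. alp g (?z k) (?z j))"
    have i3: "alp g x y1 * bep g x (?z k) + bep g x y1 * bep g y1 (?z k) + gap g x y1 * ga g y1 (?z k) = bep g x (?z k) * alp g (?z k) y1"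
      by (rule I3) (use gxy1 gxz gy1z k in auto)
    have i4: "alp g x y1 * gap g x (?z k) + bep g x y1 * gap g y1 (?z k) + gap g x y1 * be g y1 (?z k) = gap g x (?z k) * al g (?z k) y1"
      by (rule I4) (use gxy1 gxz gy1z k in auto)
    have l: "uD g LA LD x (y1#ys) (Suc k) = bep g x (?z k) * LD (?z k) * (alp g (?z k) y1 * PD) + gap g x (?z k) * LA (?z k) * (al g (?z k) y1 * PA)"
      unfolding uD_def PA_def PD_def using k by (simp add: prod_del_Suc)
    have r: "alp g x y1 * uD g LA LD x ys k + bep g x y1 * uD g LA LD y1 ys k + gap g x y1 * uA g LA LD y1 ys k
       = LD (?z k) * PD * (alp g x y1 * bep g x (?z k) + bep g x y1 * bep g y1 (?z k) + gap g x y1 * ga g y1 (?z k))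
        + LA (?z k) * PA * (alp g x y1 * gap g x (?z k) + bep g x y1 * gap g y1 (?z k) + gap g x y1 * be g y1 (?z k))"
      unfolding uA_def uD_def PA_def PD_def by (simp add: algebra_simps)
    show ?thesis unfolding l r i3 i4 by (simp add: algebra_simps)
  qed
  have A: "F (A x (foldr B (y1#ys) v0)) = LA x * (\<Prod>k<length (y1#ys). al g x ((y1#ys)!k)) * F (foldr B (y1#ys) v0)
            + (\<Sum>k<length (y1#ys). uA g LA LD x (y1#ys) k * F (B x (foldr B (del_at k (y1#ys)) v0)))"
  proof -
    have "F (A x (foldr B (y1#ys) v0)) = al g x y1 * F1 (A x ?P) + be g x y1 * F2 (A y1 ?P) + ga g x y1 * F2 (D y1 ?P)"
      unfolding F1_def F2_def using relA[OF Cons.prems(1) PV gxy1] by simp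
    also have "\<dots> = al g x y1 * (LA x * (\<Prod>k<?n. al g x (?z k)) * F (foldr B (y1#ys) v0) + (\<Sum>k<?n. uA g LA LD x ys k * W k))
        + be g x y1 * (LA y1 * (\<Prod>k<?n. al g y1 (?z k)) * W0 + (\<Sum>k<?n. uA g LA LD y1 ys k * W k))
        + ga g x y1 * (LD y1 * (\<Prod>k<?n. alp g y1 (?z k)) * W0 + (\<Sum>k<?n. uD g LA LD y1 ys k * W k))"
      using IHx IHy by (simp add: w1 w2 f1 f2)
    also have "\<dots> = LA x * (al g x y1 * (\<Prod>k<?n. al g x (?z k))) * F (foldr B (y1#ys) v0)
        + (uA g LA LD x (y1#ys) 0 * W0 + (\<Sum>k<?n. uA g LA LD x (y1#ys) (Suc k) * W k))"
      unfolding uA0 by (simp add: uAS sum_distrib_left sum.distrib algebra_simps)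
    finally show ?thesis unfolding palx sumsplit d0 dS .
  qed
  have D: "F (D x (foldr B (y1#ys) v0)) = LD x * (\<Prod>k<length (y1#ys). alp g x ((y1#ys)!k)) * F (foldr B (y1#ys) v0)
            + (\<Sum>k<length (y1#ys). uD g LA LD x (y1#ys) k * F (B x (foldr B (del_at k (y1#ys)) v0)))"
  proof -
    have "F (D x (foldr B (y1#ys) v0)) = alp g x y1 * F1 (D x ?P) + bep g x y1 * F2 (D y1 ?P) + gap g x y1 * F2 (A y1 ?P)"
      unfolding F1_def F2_def using relD[OF Cons.prems(1) PV gxy1] by simp
    also have "\<dots> = alp g x y1 * (LD x * (\<Prod>k<?n. alp g x (?z k)) * F (foldr B (y1#ys) v0) + (\<Sum>k<?n. uD g LA LD x ys k * W k))
        + bep g x y1 * (LD y1 * (\<Prod>k<?n. alp g y1 (?z k)) * W0 + (\<Sum>k<?n. uD g LA LD y1 ys k * W k))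
        + gap g x y1 * (LA y1 * (\<Prod>k<?n. al g y1 (?z k)) * W0 + (\<Sum>k<?n. uA g LA LD y1 ys k * W k))"
      using IHx IHy by (simp add: w1 w2 f1 f2)
    also have "\<dots> = LD x * (alp g x y1 * (\<Prod>k<?n. alp g x (?z k))) * F (foldr B (y1#ys) v0)
        + (uD g LA LD x (y1#ys) 0 * W0 + (\<Sum>k<?n. uD g LA LD x (y1#ys) (Suc k) * W k))"
      unfolding uD0 by (simp add: uDS sum_distrib_left sum.distrib algebra_simps)
    finally show ?thesis unfolding palpx sumsplit d0 dS .
  qed
  show ?case using A D by blast
qed

end

definition linloc :: "nat \<Rightarrow> (qvec \<Rightarrow> complex) set" where
  "linloc L = {F. (\<forall>w1 w2. (\<forall>s. length s = L \<longrightarrow> w1 s = w2 s) \<longrightarrow> F w1 = F w2)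
                 \<and> (\<forall>a b w1 w2. F (\<lambda>s. a * w1 s + b * w2 s) = a * F w1 + b * F w2)}"

lemma linlocD1: "F \<in> linloc L \<Longrightarrow> (\<And>s. length s = L \<Longrightarrow> w1 s = w2 s) \<Longrightarrow> F w1 = F w2"
  unfolding linloc_def by blast
lemma linlocD2: "F \<in> linloc L \<Longrightarrow> F (\<lambda>s. a * w1 s + b * w2 s) = a * F w1 + b * F w2"
  unfolding linloc_def by blast
lemma linloc3: "F \<in> linloc L \<Longrightarrow> F (\<lambda>s. a * w1 s + b * w2 s + c * w3 s) = a * F w1 + b * F w2 + c * F w3"
proof -
  assume F: "F \<in> linloc L"
  have "F (\<lambda>s. a * w1 s + b * w2 s + c * w3 s) = F (\<lambda>s. 1 * (\<lambda>s. a * w1 s + b * w2 s) s + c * w3 s)" by simp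
  also have "\<dots> = 1 * F (\<lambda>s. a * w1 s + b * w2 s) + c * F w3" by (rule linlocD2[OF F])
  also have "F (\<lambda>s. a * w1 s + b * w2 s) = a * F w1 + b * F w2" by (rule linlocD2[OF F])
  finally show ?thesis by simp
qed

lemma Top_local: "(\<And>s. length s = length mu \<Longrightarrow> w1 s = w2 s) \<Longrightarrow> length s = length mu \<Longrightarrow>
   Top g h mu i j x w1 s = Top g h mu i j x w2 s"
  unfolding Top_def by (rule alocD[OF aloc_DRop]) auto

lemma Dt_local: "(\<And>s. length s = length mu \<Longrightarrow> w1 s = w2 s) \<Longrightarrow> length s = length mu \<Longrightarrow>
   Dt g h mu x w1 s = Dt g h mu x w2 s"
  unfolding Dt_def using Top_local by metis

lemma Top_lin2: "Top g h mu i j x (\<lambda>s. a * w1 s + b * w2 s) = (\<lambda>s. a * Top g h mu i j x w1 s + b * Top g h mu i j x w2 s)"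
  by (simp add: Top_add Top_scale)

lemma Dt_lin2: "Dt g h mu x (\<lambda>s. a * w1 s + b * w2 s) = (\<lambda>s. a * Dt g h mu x w1 s + b * Dt g h mu x w2 s)"
  unfolding Dt_def Top_lin2 by (simp add: fun_eq_iff algebra_simps)

lemma linloc_Top: "F \<in> linloc (length mu) \<Longrightarrow> (\<lambda>v. F (Top g h mu i j y v)) \<in> linloc (length mu)"
  unfolding linloc_def
proof (safe)
  fix w1 w2 :: qvec assume F1: "\<forall>w1 w2. (\<forall>s. length s = length mu \<longrightarrow> w1 s = w2 s) \<longrightarrow> F w1 = F w2"
    and H: "\<forall>s. length s = length mu \<longrightarrow> w1 s = w2 s"
  show "F (Top g h mu i j y w1) = F (Top g h mu i j y w2)"
    using F1 Top_local[of mu w1 w2] H by blast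
next
  fix a b :: complex and w1 w2 :: qvec assume F2: "\<forall>a b w1 w2. F (\<lambda>s. a * w1 s + b * w2 s) = a * F w1 + b * F w2"
  show "F (Top g h mu i j y (\<lambda>s. a * w1 s + b * w2 s)) = a * F (Top g h mu i j y w1) + b * F (Top g h mu i j y w2)"
    unfolding Top_lin2 using F2 by blast
qed

lemma linloc_Dt: "F \<in> linloc (length mu) \<Longrightarrow> (\<lambda>v. F (Dt g h mu y v)) \<in> linloc (length mu)"
  unfolding linloc_def
proof (safe)
  fix w1 w2 :: qvec assume F1: "\<forall>w1 w2. (\<forall>s. length s = length mu \<longrightarrow> w1 s = w2 s) \<longrightarrow> F w1 = F w2"
    and H: "\<forall>s. length s = length mu \<longrightarrow> w1 s = w2 s"
  show "F (Dt g h mu y w1) = F (Dt g h mu y w2)"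
    using F1 Dt_local[of mu w1 w2] H by blast
next
  fix a b :: complex and w1 w2 :: qvec assume F2: "\<forall>a b w1 w2. F (\<lambda>s. a * w1 s + b * w2 s) = a * F w1 + b * F w2"
  show "F (Dt g h mu y (\<lambda>s. a * w1 s + b * w2 s)) = a * F (Dt g h mu y w1) + b * F (Dt g h mu y w2)"
    unfolding Dt_lin2 using F2 by blast
qed

lemma right_off: "offshell g (\<lambda>x. Top g h mu 0 0 x) (Dt g h mu) (\<lambda>x. Top g h mu 0 1 x)
   (LambdaA g h mu) (LambdaDt g h mu) (vac (length mu)) UNIV (linloc (length mu))"
proof (unfold_locales)
  fix F y assume "F \<in> linloc (length mu)"
  then show "(\<lambda>v. F (Top g h mu 0 1 y v)) \<in> linloc (length mu)" by (rule linloc_Top)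
next
  fix F v x y assume F: "F \<in> linloc (length mu)" and gen: "gen g x y"
  have "F (Top g h mu 0 0 x (Top g h mu 0 1 y v)) = F (\<lambda>s. al g x y * Top g h mu 0 1 y (Top g h mu 0 0 x v) s
      + be g x y * Top g h mu 0 1 x (Top g h mu 0 0 y v) s + ga g x y * Top g h mu 0 1 x (Dt g h mu y v) s)"
    by (rule linlocD1[OF F]) (rule relAB[OF gen], simp)
  then show "F (Top g h mu 0 0 x (Top g h mu 0 1 y v)) = al g x y * F (Top g h mu 0 1 y (Top g h mu 0 0 x v))
      + be g x y * F (Top g h mu 0 1 x (Top g h mu 0 0 y v)) + ga g x y * F (Top g h mu 0 1 x (Dt g h mu y v))"
    using linloc3[OF F] by simp
next
  fix F v x y assume F: "F \<in> linloc (length mu)" and gen: "gen g x y"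
  have "F (Dt g h mu x (Top g h mu 0 1 y v)) = F (\<lambda>s. alp g x y * Top g h mu 0 1 y (Dt g h mu x v) s
      + bep g x y * Top g h mu 0 1 x (Dt g h mu y v) s + gap g x y * Top g h mu 0 1 x (Top g h mu 0 0 y v) s)"
    by (rule linlocD1[OF F]) (rule relDB[OF gen], simp)
  then show "F (Dt g h mu x (Top g h mu 0 1 y v)) = alp g x y * F (Top g h mu 0 1 y (Dt g h mu x v))
      + bep g x y * F (Top g h mu 0 1 x (Dt g h mu y v)) + gap g x y * F (Top g h mu 0 1 x (Top g h mu 0 0 y v))"
    using linloc3[OF F] by simp
next
  fix F v x y assume F: "F \<in> linloc (length mu)"
  show "F (Top g h mu 0 1 x (Top g h mu 0 1 y v)) = F (Top g h mu 0 1 y (Top g h mu 0 1 x v))"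
    by (rule linlocD1[OF F]) (rule relBB, simp)
next
  fix F x assume F: "F \<in> linloc (length mu)"
  have "F (Top g h mu 0 0 x (vac (length mu))) = F (\<lambda>s. LambdaA g h mu x * vac (length mu) s + 0 * vac (length mu) s)"
    by (rule linlocD1[OF F]) (simp add: right_vacA)
  also have "\<dots> = LambdaA g h mu x * F (vac (length mu)) + 0 * F (vac (length mu))" by (rule linlocD2[OF F])
  finally show "F (Top g h mu 0 0 x (vac (length mu))) = LambdaA g h mu x * F (vac (length mu))"
    by simp
next
  fix F x assume F: "F \<in> linloc (length mu)" and a: "fa g (2*x) \<noteq> 0"
  have "F (Dt g h mu x (vac (length mu))) = F (\<lambda>s. LambdaDt g h mu x * vac (length mu) s + 0 * vac (length mu) s)"
    by (rule linlocD1[OF F]) (simp add: right_vacDt[OF a])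
  also have "\<dots> = LambdaDt g h mu x * F (vac (length mu)) + 0 * F (vac (length mu))" by (rule linlocD2[OF F])
  finally show "F (Dt g h mu x (vac (length mu))) = LambdaDt g h mu x * F (vac (length mu))"
    by simp
qed simp_all

lemma left_off: "offshell g (\<lambda>x \<phi> w. \<phi> (Top g h mu 0 0 x w)) (\<lambda>x \<phi> w. \<phi> (Dt g h mu x w))
   (\<lambda>y \<phi> w. \<phi> (Top g h mu 1 0 y w))
   (LambdaA g h mu) (LambdaDt g h mu) (\<lambda>w. w (replicate (length mu) 0)) (linloc (length mu))
   {F. \<exists>w. F = (\<lambda>\<phi>. \<phi> w)}"
proof (unfold_locales)
  show "(\<lambda>w. w (replicate (length mu) 0)) \<in> linloc (length mu)"
    unfolding linloc_def by simp
next
  fix v y assume "v \<in> linloc (length mu)"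
  then show "(\<lambda>w. v (Top g h mu 1 0 y w)) \<in> linloc (length mu)" by (rule linloc_Top)
next
  fix F :: "(qvec \<Rightarrow> complex) \<Rightarrow> complex" and y
  assume "F \<in> {F. \<exists>w. F = (\<lambda>\<phi>. \<phi> w)}"
  then obtain w where "F = (\<lambda>\<phi>. \<phi> w)" by blast
  then show "(\<lambda>v. F (\<lambda>w. v (Top g h mu 1 0 y w))) \<in> {F. \<exists>w. F = (\<lambda>\<phi>. \<phi> w)}" by auto
next
  fix F :: "(qvec \<Rightarrow> complex) \<Rightarrow> complex" and v x y
  assume F: "F \<in> {F. \<exists>w. F = (\<lambda>\<phi>. \<phi> w)}" and v: "v \<in> linloc (length mu)" and gen: "gen g x y"
  obtain w where Fw: "F = (\<lambda>\<phi>. \<phi> w)" using F by blast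
  have "v (Top g h mu 1 0 y (Top g h mu 0 0 x w)) = v (\<lambda>s. al g x y * Top g h mu 0 0 x (Top g h mu 1 0 y w) s
      + be g x y * Top g h mu 0 0 y (Top g h mu 1 0 x w) s + ga g x y * Dt g h mu y (Top g h mu 1 0 x w) s)"
    by (rule linlocD1[OF v]) (rule relCA[OF gen], simp)
  then show "F (\<lambda>w. (\<lambda>w. v (Top g h mu 1 0 y w)) (Top g h mu 0 0 x w))
     = al g x y * F (\<lambda>w. (\<lambda>w. v (Top g h mu 0 0 x w)) (Top g h mu 1 0 y w))
       + be g x y * F (\<lambda>w. (\<lambda>w. v (Top g h mu 0 0 y w)) (Top g h mu 1 0 x w))
       + ga g x y * F (\<lambda>w. (\<lambda>w. v (Dt g h mu y w)) (Top g h mu 1 0 x w))"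
    unfolding Fw using linloc3[OF v] by simp
next
  fix F :: "(qvec \<Rightarrow> complex) \<Rightarrow> complex" and v x y
  assume F: "F \<in> {F. \<exists>w. F = (\<lambda>\<phi>. \<phi> w)}" and v: "v \<in> linloc (length mu)" and gen: "gen g x y"
  obtain w where Fw: "F = (\<lambda>\<phi>. \<phi> w)" using F by blast
  have "v (Top g h mu 1 0 y (Dt g h mu x w)) = v (\<lambda>s. alp g x y * Dt g h mu x (Top g h mu 1 0 y w) s
      + bep g x y * Dt g h mu y (Top g h mu 1 0 x w) s + gap g x y * Top g h mu 0 0 y (Top g h mu 1 0 x w) s)"
    by (rule linlocD1[OF v]) (rule relCD[OF gen], simp)
  then show "F (\<lambda>w. (\<lambda>w. v (Top g h mu 1 0 y w)) (Dt g h mu x w))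
     = alp g x y * F (\<lambda>w. (\<lambda>w. v (Dt g h mu x w)) (Top g h mu 1 0 y w))
       + bep g x y * F (\<lambda>w. (\<lambda>w. v (Dt g h mu y w)) (Top g h mu 1 0 x w))
       + gap g x y * F (\<lambda>w. (\<lambda>w. v (Top g h mu 0 0 y w)) (Top g h mu 1 0 x w))"
    unfolding Fw using linloc3[OF v] by simp
next
  fix F :: "(qvec \<Rightarrow> complex) \<Rightarrow> complex" and v x y
  assume F: "F \<in> {F. \<exists>w. F = (\<lambda>\<phi>. \<phi> w)}" and v: "v \<in> linloc (length mu)"
  obtain w where Fw: "F = (\<lambda>\<phi>. \<phi> w)" using F by blast
  have "v (Top g h mu 1 0 y (Top g h mu 1 0 x w)) = v (Top g h mu 1 0 x (Top g h mu 1 0 y w))"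
    by (rule linlocD1[OF v]) (rule relCC, simp)
  then show "F (\<lambda>w. (\<lambda>w. v (Top g h mu 1 0 y w)) (Top g h mu 1 0 x w))
     = F (\<lambda>w. (\<lambda>w. v (Top g h mu 1 0 x w)) (Top g h mu 1 0 y w))"
    unfolding Fw by simp
next
  fix F :: "(qvec \<Rightarrow> complex) \<Rightarrow> complex" and x
  assume F: "F \<in> {F. \<exists>w. F = (\<lambda>\<phi>. \<phi> w)}"
  obtain w where Fw: "F = (\<lambda>\<phi>. \<phi> w)" using F by blast
  show "F (\<lambda>w. (\<lambda>w. w (replicate (length mu) 0)) (Top g h mu 0 0 x w))
      = LambdaA g h mu x * F (\<lambda>w. w (replicate (length mu) 0))"
    unfolding Fw by (simp add: left_vacA)
next
  fix F :: "(qvec \<Rightarrow> complex) \<Rightarrow> complex" and x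
  assume F: "F \<in> {F. \<exists>w. F = (\<lambda>\<phi>. \<phi> w)}" and a: "fa g (2*x) \<noteq> 0"
  obtain w where Fw: "F = (\<lambda>\<phi>. \<phi> w)" using F by blast
  show "F (\<lambda>w. (\<lambda>w. w (replicate (length mu) 0)) (Dt g h mu x w))
      = LambdaDt g h mu x * F (\<lambda>w. w (replicate (length mu) 0))"
    unfolding Fw by (simp add: left_vacDt[OF a])
qed

lemma fold_C_eq: "fold (\<lambda>x w. Top g h mu 1 0 x w) xs v z
   = foldr (\<lambda>y \<phi> w. \<phi> (Top g h mu 1 0 y w)) xs (\<lambda>w. w z) v"
  by (induction xs arbitrary: v) auto

lemma Sn_eq: "Sn g h mu xs ys = foldr (\<lambda>y \<phi> w. \<phi> (Top g h mu 1 0 y w)) xs (\<lambda>w. w (replicate (length mu) 0))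
     (foldr (\<lambda>y w. Top g h mu 0 1 y w) ys (vac (length mu)))"
  unfolding Sn_def Cop_def Bop_def by (rule fold_C_eq)

lemma alp_split: "alp g x y = fa g (x - y) / fb (x - y) * (fa g (x + y + g) / fb (x + y + g))"
  unfolding alp_def by simp

lemma NB_eq: "NB g h mu l0 ys k = uD g (LambdaA g h mu) (LambdaDt g h mu) l0 ys k"
proof -
  have p1: "(\<Prod>j\<in>{..<length ys} - {k}. fa g (ys ! j - ys ! k) / fb (ys ! j - ys ! k) * (fb (ys ! j + ys ! k) / fa g (ys ! j + ys ! k)))
     = (\<Prod>j\<in>{..<length ys} - {k}. al g (ys ! k) (ys ! j))"
    by (rule prod.cong) (simp_all add: al_def add.commute)
  have p2: "(\<Prod>j\<in>{..<length ys} - {k}. fa g (ys ! k - ys ! j) / fb (ys ! k - ys ! j) * (fa g (ys ! k + ys ! j + g) / fb (ys ! k + ys ! j + g)))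
     = (\<Prod>j\<in>{..<length ys} - {k}. alp g (ys ! k) (ys ! j))"
    by (rule prod.cong) (simp_all add: alp_split)
  show ?thesis unfolding NB_def uD_def Let_def p1 p2 bep_def gap_def
    by (simp add: algebra_simps)
qed

lemma NC_eq: "NC g h mu l0 xs k = - uD g (LambdaA g h mu) (LambdaDt g h mu) l0 xs k"
proof -
  have p1: "(\<Prod>j\<in>{..<length xs} - {k}. fa g (xs ! j - xs ! k) / fb (xs ! j - xs ! k) * (fb (xs ! j + xs ! k) / fa g (xs ! j + xs ! k)))
     = (\<Prod>j\<in>{..<length xs} - {k}. al g (xs ! k) (xs ! j))"
    by (rule prod.cong) (simp_all add: al_def add.commute)
  have p2: "(\<Prod>j\<in>{..<length xs} - {k}. fa g (xs ! k - xs ! j) / fb (xs ! k - xs ! j) * (fa g (xs ! k + xs ! j + g) / fb (xs ! k + xs ! j + g)))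
     = (\<Prod>j\<in>{..<length xs} - {k}. alp g (xs ! k) (xs ! j))"
    by (rule prod.cong) (simp_all add: alp_split)
  show ?thesis unfolding NC_def uD_def Let_def p1 p2 bep_def gap_def
    by (simp add: algebra_simps)
qed

lemma M0_eq: "M0 g h mu l0 xs ys = LambdaDt g h mu l0 * ((\<Prod>k<length ys. alp g l0 (ys!k)) - (\<Prod>k<length xs. alp g l0 (xs!k)))"
  unfolding M0_def alp_split ..

theorem theorem2:
  fixes \<gamma> h l0 :: complex and mu xs ys :: "complex list" and n :: nat
  assumes "length mu \<ge> 1"
    and "n \<ge> 1" and "length xs = n" and "length ys = n"
    and "fa \<gamma> (2 * l0) \<noteq> 0" and "fb (2 * l0 + \<gamma>) \<noteq> 0"
    and "\<forall>x\<in>set xs \<union> set ys. fb (l0 - x) \<noteq> 0 \<and> fb (l0 + x + \<gamma>) \<noteq> 0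
            \<and> fa \<gamma> (2 * x) \<noteq> 0 \<and> fa \<gamma> (l0 + x) \<noteq> 0"
    and "\<forall>j<n. \<forall>k<n. j \<noteq> k \<longrightarrow> fb (xs ! j - xs ! k) \<noteq> 0 \<and> fa \<gamma> (xs ! j + xs ! k) \<noteq> 0
            \<and> fb (xs ! j + xs ! k + \<gamma>) \<noteq> 0"
    and "\<forall>j<n. \<forall>k<n. j \<noteq> k \<longrightarrow> fb (ys ! j - ys ! k) \<noteq> 0 \<and> fa \<gamma> (ys ! j + ys ! k) \<noteq> 0
            \<and> fb (ys ! j + ys ! k + \<gamma>) \<noteq> 0"
  shows "M0 \<gamma> h mu l0 xs ys * Sn \<gamma> h mu xs ys
         + (\<Sum>k<n. NC \<gamma> h mu l0 xs k * Sn \<gamma> h mu (l0 # del_at k xs) ys)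
         + (\<Sum>k<n. NB \<gamma> h mu l0 ys k * Sn \<gamma> h mu xs (l0 # del_at k ys)) = 0"
proof -
  let ?L = "length mu"
  let ?z = "replicate ?L (0::nat)"
  let ?LA = "LambdaA \<gamma> h mu" and ?LD = "LambdaDt \<gamma> h mu"
  define Bf where "Bf = (\<lambda>y w. Top \<gamma> h mu 0 1 y w)"
  define Bl where "Bl = (\<lambda>y (\<phi>::qvec \<Rightarrow> complex) w. \<phi> (Top \<gamma> h mu 1 0 y w))"
  define v0l where "v0l = (\<lambda>w::qvec. w ?z)"
  define Psi where "Psi ys' = foldr Bf ys' (vac ?L)" for ys'
  define Phi where "Phi xs' = foldr Bl xs' v0l" for xs'
  have Sn: "Sn \<gamma> h mu xs' ys' = Phi xs' (Psi ys')" for xs' ys'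
    unfolding Phi_def Psi_def Bl_def Bf_def v0l_def by (rule Sn_eq)
  interpret R: offshell \<gamma> "\<lambda>x. Top \<gamma> h mu 0 0 x" "Dt \<gamma> h mu" "\<lambda>x. Top \<gamma> h mu 0 1 x"
     ?LA ?LD "vac ?L" UNIV "linloc ?L"
    by (rule right_off)
  interpret Lf: offshell \<gamma> "\<lambda>x \<phi> w. \<phi> (Top \<gamma> h mu 0 0 x w)" "\<lambda>x \<phi> w. \<phi> (Dt \<gamma> h mu x w)"
     "\<lambda>y \<phi> w. \<phi> (Top \<gamma> h mu 1 0 y w)" ?LA ?LD v0l "linloc ?L" "{F. \<exists>w. F = (\<lambda>\<phi>. \<phi> w)}"
    unfolding v0l_def by (rule left_off)
  have a2: "fa \<gamma> (2*l0) \<noteq> 0" using assms(5) .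
  have gxs: "\<forall>k<length xs. gen \<gamma> l0 (xs!k)" using assms(3,5,7) unfolding gen_def by (auto simp: fa_def)
  have gys: "\<forall>k<length ys. gen \<gamma> l0 (ys!k)" using assms(4,5,7) unfolding gen_def by (auto simp: fa_def)
  have gxx: "\<forall>j<length xs. \<forall>k<length xs. j \<noteq> k \<longrightarrow> gen \<gamma> (xs!j) (xs!k)"
    using assms(3,7,8) unfolding gen_def by auto
  have gyy: "\<forall>j<length ys. \<forall>k<length ys. j \<noteq> k \<longrightarrow> gen \<gamma> (ys!j) (ys!k)"
    using assms(4,7,9) unfolding gen_def by auto
  have PhiV: "Phi xs \<in> linloc ?L" unfolding Phi_def Bl_def using Lf.foldr_V .
  have RR: "Phi xs (Dt \<gamma> h mu l0 (Psi ys)) = ?LD l0 * (\<Prod>k<length ys. alp \<gamma> l0 (ys!k)) * Phi xs (Psi ys)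
       + (\<Sum>k<length ys. uD \<gamma> ?LA ?LD l0 ys k * Phi xs (Psi (l0 # del_at k ys)))"
    using conjunct2[OF R.off_both[OF PhiV gys gyy a2]] unfolding Psi_def Bf_def by simp
  have FT: "(\<lambda>\<phi>. \<phi> (Psi ys)) \<in> {F. \<exists>w. F = (\<lambda>\<phi>. \<phi> w)}" by blast
  have LL: "Phi xs (Dt \<gamma> h mu l0 (Psi ys)) = ?LD l0 * (\<Prod>k<length xs. alp \<gamma> l0 (xs!k)) * Phi xs (Psi ys)
       + (\<Sum>k<length xs. uD \<gamma> ?LA ?LD l0 xs k * Phi (l0 # del_at k xs) (Psi ys))"
    using conjunct2[OF Lf.off_both[OF FT gxs gxx a2]] unfolding Phi_def Bl_def by simp
  show ?thesis
    unfolding Sn M0_eq NB_eq NC_eq using RR LL assms(3,4)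
    by (simp add: algebra_simps sum_negf)
qed

end
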